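(* For every $\theta\in V_\Lambda$, the classes $\mathcal P(\theta)$ and $\overline{\mathcal P}(\theta)$ are pseudo-torsion classes in $\mathcal G$. Moreover, each of them is closed under arbitrary extensions in $\mathrm{mod}\text-\Lambda$ (if $0\to A\to B\to C\to 0$ is exact with $A,C$ in the class then $B$ is in the class); in particular they are closed under direct sums.
   Context: Let $\Lambda$ be a finite dimensional algebra over a field with $n$ isoclasses of simple modules, and $\mathrm{mod}\text-\Lambda$ the category of finitely generated right $\Lambda$-modules. Fix a torsion class $\mathcal G\subseteq\mathrm{mod}\text-\Lambda$ (closed under isomorphisms, extensions and quotients). For $B\in\mathcal G$, a subobject of $B$ is a submodule in $\mathcal G$; a subobject $A\subseteq B$ is strict if $A\cap B'\in\mathcal G$ for every subobject $B'$ of $B$; a strict quotient of $B$ is $B/A$ with $A$ a strict subobject. A short exact sequence $0\to A\to B\to C\to 0$ in $\mathcal G$ is strict exact if $A$ is a strict subobject of $B$. A pseudo-torsion class is a nonempty class $\mathcal P\subseteq\mathcal G$ closed under strict quotients and strict extensions. Let $K_0\Lambda\cong\mathbb Z^n$ and $V_\Lambda=\mathrm{Hom}_{\mathbb Z}(K_0\Lambda,\mathbb R)\cong\mathbb R^n$; for $\theta\in V_\Lambda$ and a module $M$, $\theta(M)$ denotes $\theta$ applied to the dimension vector (composition-factor multiplicities) of $M$. Define $\mathcal P(\theta)$ as the class consisting of $0$ and all nonzero $M\in\mathcal G$ with $\theta(M'')>0$ for every nonzero strict quotient $M''$ of $M$ (including $M''=M$); and $\overline{\mathcal P}(\theta)$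 as the class of $M\in\mathcal G$ with $\theta(M'')\ge 0$ for every strict quotient $M''$ of $M$. *)

theory Defs
  imports Complex_Main "HOL-Algebra.Module"
begin

definition fd_algebra :: "'k ring \<Rightarrow> 'a ring \<Rightarrow> ('k \<Rightarrow> 'a) \<Rightarrow> bool" where
  "fd_algebra K R phi \<longleftrightarrow> field K \<and> ring R \<and> phi \<in> ring_hom K R \<and>
     (\<forall>c\<in>carrier K. \<forall>r\<in>carrier R. phi c \<otimes>\<^bsub>R\<^esub> r = r \<otimes>\<^bsub>R\<^esub> phi c) \<and>
     (\<exists>B. finite B \<and> B \<subseteq> carrier R \<and>
        (\<forall>r\<in>carrier R. \<exists>c\<in>B \<rightarrow> carrier K.
            r = (\<Oplus>\<^bsub>R\<^esub> b\<in>B. phi (c b) \<otimes>\<^bsub>R\<^esub> b)))"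

(* A right R-module is represented by a HOL-Algebra module record M, where
  the term smult M r m (written r .M m) stands for the right action m.r. *)
definition right_module :: "'a ring \<Rightarrow> ('a, 'b) module \<Rightarrow> bool" where
  "right_module R M \<longleftrightarrow> ring R \<and> abelian_group M \<and>
     (\<forall>r\<in>carrier R. \<forall>m\<in>carrier M. r \<odot>\<^bsub>M\<^esub> m \<in> carrier M) \<and>
     (\<forall>m\<in>carrier M. \<one>\<^bsub>R\<^esub> \<odot>\<^bsub>M\<^esub> m = m) \<and>
     (\<forall>r\<in>carrier R. \<forall>s\<in>carrier R. \<forall>m\<in>carrier M.
         (r \<oplus>\<^bsub>R\<^esub> s) \<odot>\<^bsub>M\<^esub> m = (r \<odot>\<^bsub>M\<^esub> m) \<oplus>\<^bsub>M\<^esub> (s \<odot>\<^bsub>M\<^esub> m)) \<and>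
     (\<forall>r\<in>carrier R. \<forall>m\<in>carrier M. \<forall>n\<in>carrier M.
         r \<odot>\<^bsub>M\<^esub> (m \<oplus>\<^bsub>M\<^esub> n) = (r \<odot>\<^bsub>M\<^esub> m) \<oplus>\<^bsub>M\<^esub> (r \<odot>\<^bsub>M\<^esub> n)) \<and>
     (\<forall>r\<in>carrier R. \<forall>s\<in>carrier R. \<forall>m\<in>carrier M.
         (r \<otimes>\<^bsub>R\<^esub> s) \<odot>\<^bsub>M\<^esub> m = s \<odot>\<^bsub>M\<^esub> (r \<odot>\<^bsub>M\<^esub> m))"

definition fin_gen :: "'a ring \<Rightarrow> ('a, 'b) module \<Rightarrow> bool" where
  "fin_gen R M \<longleftrightarrow> (\<exists>S. finite S \<and> S \<subseteq> carrier M \<and>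
     (\<forall>m\<in>carrier M. \<exists>f\<in>S \<rightarrow> carrier R. m = (\<Oplus>\<^bsub>M\<^esub> s\<in>S. f s \<odot>\<^bsub>M\<^esub> s)))"

definition modL :: "'a ring \<Rightarrow> ('a, 'b) module \<Rightarrow> bool" where
  "modL R M \<longleftrightarrow> right_module R M \<and> fin_gen R M"

definition is_zero_mod :: "('a, 'b) module \<Rightarrow> bool" where
  "is_zero_mod M \<longleftrightarrow> carrier M = {\<zero>\<^bsub>M\<^esub>}"

definition rsubmod :: "'a ring \<Rightarrow> ('a, 'b) module \<Rightarrow> 'b set \<Rightarrow> bool" where
  "rsubmod R M N \<longleftrightarrow> N \<subseteq> carrier M \<and> \<zero>\<^bsub>M\<^esub> \<in> N \<and>
     (\<forall>x\<in>N. \<forall>y\<in>N. x \<oplus>\<^bsub>M\<^esub> y \<in> N) \<and> (\<forall>x\<in>N. \<ominus>\<^bsub>M\<^esub> x \<in> N) \<and>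
     (\<forall>r\<in>carrier R. \<forall>x\<in>N. r \<odot>\<^bsub>M\<^esub> x \<in> N)"

definition subm :: "('a, 'b) module \<Rightarrow> 'b set \<Rightarrow> ('a, 'b) module" where
  "subm M N = M\<lparr>carrier := N\<rparr>"

definition rhom :: "'a ring \<Rightarrow> ('a, 'b) module \<Rightarrow> ('a, 'b) module \<Rightarrow> ('b \<Rightarrow> 'b) \<Rightarrow> bool" where
  "rhom R M N f \<longleftrightarrow> f \<in> carrier M \<rightarrow> carrier N \<and>
     (\<forall>x\<in>carrier M. \<forall>y\<in>carrier M. f (x \<oplus>\<^bsub>M\<^esub> y) = f x \<oplus>\<^bsub>N\<^esub> f y) \<and>
     (\<forall>r\<in>carrier R. \<forall>x\<in>carrier M. f (r \<odot>\<^bsub>M\<^esub> x) = r \<odot>\<^bsub>N\<^esub> f x)"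

definition kern :: "('a, 'b) module \<Rightarrow> ('a, 'b) module \<Rightarrow> ('b \<Rightarrow> 'b) \<Rightarrow> 'b set" where
  "kern M N f = {x \<in> carrier M. f x = \<zero>\<^bsub>N\<^esub>}"

definition ses :: "'a ring \<Rightarrow> ('a, 'b) module \<Rightarrow> ('a, 'b) module \<Rightarrow> ('a, 'b) module
                    \<Rightarrow> ('b \<Rightarrow> 'b) \<Rightarrow> ('b \<Rightarrow> 'b) \<Rightarrow> bool" where
  "ses R A B C f g \<longleftrightarrow> modL R A \<and> modL R B \<and> modL R C \<and>
     rhom R A B f \<and> inj_on f (carrier A) \<and>
     rhom R B C g \<and> g ` carrier B = carrier C \<and>
     f ` carrier A = kern B C g"

definition quot_map :: "'a ring \<Rightarrow> ('a, 'b) module \<Rightarrow> ('a, 'b) module \<Rightarrow> ('b \<Rightarrow> 'b) \<Rightarrow> bool" where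
  "quot_map R B C g \<longleftrightarrow> modL R B \<and> modL R C \<and> rhom R B C g \<and> g ` carrier B = carrier C"

type_synonym ('a, 'b) modclass = "('a, 'b) module \<Rightarrow> bool"

definition ext_closed :: "'a ring \<Rightarrow> ('a, 'b) modclass \<Rightarrow> bool" where
  "ext_closed R P \<longleftrightarrow> (\<forall>A B C f g. ses R A B C f g \<and> P A \<and> P C \<longrightarrow> P B)"

definition torsion_class :: "'a ring \<Rightarrow> ('a, 'b) modclass \<Rightarrow> bool" where
  "torsion_class R G \<longleftrightarrow>
     (\<forall>M. G M \<longrightarrow> modL R M) \<and>
     (\<forall>M. modL R M \<and> is_zero_mod M \<longrightarrow> G M) \<and>
     (\<forall>B C g. quot_map R B C g \<and> inj_on g (carrier B) \<and> G B \<longrightarrow> G C) \<and>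
     ext_closed R G \<and>
     (\<forall>B C g. quot_map R B C g \<and> G B \<longrightarrow> G C)"

definition subobj :: "'a ring \<Rightarrow> ('a, 'b) modclass \<Rightarrow> ('a, 'b) module \<Rightarrow> 'b set \<Rightarrow> bool" where
  "subobj R G B N \<longleftrightarrow> rsubmod R B N \<and> G (subm B N)"

definition strict_subobj :: "'a ring \<Rightarrow> ('a, 'b) modclass \<Rightarrow> ('a, 'b) module \<Rightarrow> 'b set \<Rightarrow> bool" where
  "strict_subobj R G B A \<longleftrightarrow> subobj R G B A \<and>
     (\<forall>B'. subobj R G B B' \<longrightarrow> G (subm B (A \<inter> B')))"

definition strict_quot :: "'a ring \<Rightarrow> ('a, 'b) modclass \<Rightarrow> ('a, 'b) module \<Rightarrow> ('a, 'b) module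
                            \<Rightarrow> ('b \<Rightarrow> 'b) \<Rightarrow> bool" where
  "strict_quot R G B C g \<longleftrightarrow> G B \<and> quot_map R B C g \<and> strict_subobj R G B (kern B C g)"

definition strict_ses :: "'a ring \<Rightarrow> ('a, 'b) modclass \<Rightarrow> ('a, 'b) module \<Rightarrow> ('a, 'b) module
                    \<Rightarrow> ('a, 'b) module \<Rightarrow> ('b \<Rightarrow> 'b) \<Rightarrow> ('b \<Rightarrow> 'b) \<Rightarrow> bool" where
  "strict_ses R G A B C f g \<longleftrightarrow> ses R A B C f g \<and> G A \<and> G B \<and> G C \<and>
     strict_subobj R G B (f ` carrier A)"

definition pseudo_torsion_class :: "'a ring \<Rightarrow> ('a, 'b) modclass \<Rightarrow> ('a, 'b) modclass \<Rightarrow> bool" where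
  "pseudo_torsion_class R G P \<longleftrightarrow>
     (\<exists>M. P M) \<and> (\<forall>M. P M \<longrightarrow> G M) \<and>
     (\<forall>B C g. P B \<and> strict_quot R G B C g \<longrightarrow> P C) \<and>
     (\<forall>A B C f g. strict_ses R G A B C f g \<and> P A \<and> P C \<longrightarrow> P B)"

(* An element theta of V_Lambda = Hom(K_0(mod Lambda), real) is the same as a real valued
  function on mod-Lambda that is additive on short exact sequences (universal property
  of the Grothendieck group); theta M is theta applied to the class [M] = dim vector of M. *)
definition additive_fun :: "'a ring \<Rightarrow> (('a, 'b) module \<Rightarrow> real) \<Rightarrow> bool" where
  "additive_fun R \<theta> \<longleftrightarrow> (\<forall>A B C f g. ses R A B C f g \<longrightarrow> \<theta> B = \<theta> A + \<theta> C)"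

definition Pth :: "'a ring \<Rightarrow> ('a, 'b) modclass \<Rightarrow> (('a, 'b) module \<Rightarrow> real) \<Rightarrow> ('a, 'b) modclass" where
  "Pth R G \<theta> M \<longleftrightarrow> G M \<and>
     (is_zero_mod M \<or> (\<forall>C g. strict_quot R G M C g \<and> \<not> is_zero_mod C \<longrightarrow> \<theta> C > 0))"

definition Pbar :: "'a ring \<Rightarrow> ('a, 'b) modclass \<Rightarrow> (('a, 'b) module \<Rightarrow> real) \<Rightarrow> ('a, 'b) modclass" where
  "Pbar R G \<theta> M \<longleftrightarrow> G M \<and> (\<forall>C g. strict_quot R G M C g \<longrightarrow> \<theta> C \<ge> 0)"

definition dsum_closed :: "'a ring \<Rightarrow> ('a, 'b) modclass \<Rightarrow> bool" where
  "dsum_closed R P \<longleftrightarrow> (\<forall>B A C. modL R B \<and> rsubmod R B A \<and> rsubmod R B C \<and>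
      A \<inter> C = {\<zero>\<^bsub>B\<^esub>} \<and> (\<forall>x\<in>carrier B. \<exists>a\<in>A. \<exists>c\<in>C. x = a \<oplus>\<^bsub>B\<^esub> c) \<and>
      P (subm B A) \<and> P (subm B C) \<longrightarrow> P B)"

end

theory Submission
  imports Defs
begin

locale rmod =
  fixes R :: "'a ring" and M :: "('a, 'b) module" (structure)
  assumes rm: "right_module R M"
begin

lemma ringR: "ring R" using rm by (simp add: right_module_def)
lemma agM: "abelian_group M" using rm by (simp add: right_module_def)

sublocale R: ring R by (rule ringR)
sublocale M: abelian_group M by (rule agM)

lemma smult_closed[simp, intro]: "r \<in> carrier R \<Longrightarrow> m \<in> carrier M \<Longrightarrow> r \<odot> m \<in> carrier M"
  using rm by (simp add: right_module_def)
lemma smult_one[simp]: "m \<in> carrier M \<Longrightarrow> \<one>\<^bsub>R\<^esub> \<odot> m = m"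
  using rm by (simp add: right_module_def)
lemma smult_ldistr: "r \<in> carrier R \<Longrightarrow> s \<in> carrier R \<Longrightarrow> m \<in> carrier M \<Longrightarrow>
   (r \<oplus>\<^bsub>R\<^esub> s) \<odot> m = (r \<odot> m) \<oplus> (s \<odot> m)"
  using rm by (simp add: right_module_def)
lemma smult_rdistr: "r \<in> carrier R \<Longrightarrow> m \<in> carrier M \<Longrightarrow> n \<in> carrier M \<Longrightarrow>
   r \<odot> (m \<oplus> n) = (r \<odot> m) \<oplus> (r \<odot> n)"
  using rm by (simp add: right_module_def)
lemma smult_assoc: "r \<in> carrier R \<Longrightarrow> s \<in> carrier R \<Longrightarrow> m \<in> carrier M \<Longrightarrow>
   (r \<otimes>\<^bsub>R\<^esub> s) \<odot> m = s \<odot> (r \<odot> m)"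
  using rm by (simp add: right_module_def)

lemma M_idem_zero: "x \<in> carrier M \<Longrightarrow> x = x \<oplus> x \<Longrightarrow> x = \<zero>"
  by (metis M.l_neg M.r_neg1)

lemma smult_zero_l[simp]: "m \<in> carrier M \<Longrightarrow> \<zero>\<^bsub>R\<^esub> \<odot> m = \<zero>"
proof -
  assume m: "m \<in> carrier M"
  have "\<zero>\<^bsub>R\<^esub> \<odot> m = (\<zero>\<^bsub>R\<^esub> \<oplus>\<^bsub>R\<^esub> \<zero>\<^bsub>R\<^esub>) \<odot> m" by simp
  also have "\<dots> = \<zero>\<^bsub>R\<^esub> \<odot> m \<oplus> \<zero>\<^bsub>R\<^esub> \<odot> m" by (rule smult_ldistr[OF R.zero_closed R.zero_closed m])
  finally have e: "\<zero>\<^bsub>R\<^esub> \<odot> m = \<zero>\<^bsub>R\<^esub> \<odot> m \<oplus> \<zero>\<^bsub>R\<^esub> \<odot> m" .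
  show ?thesis using M_idem_zero[OF _ e] m by simp
qed

lemma smult_zero_r[simp]: "r \<in> carrier R \<Longrightarrow> r \<odot> \<zero> = \<zero>"
proof -
  assume r: "r \<in> carrier R"
  have "r \<odot> \<zero> = r \<odot> (\<zero> \<oplus> \<zero>)" by simp
  also have "\<dots> = r \<odot> \<zero> \<oplus> r \<odot> \<zero>" by (rule smult_rdistr[OF r M.zero_closed M.zero_closed])
  finally have e: "r \<odot> \<zero> = r \<odot> \<zero> \<oplus> r \<odot> \<zero>" .
  show ?thesis using M_idem_zero[OF _ e] r by simp
qed

lemma smult_minus_r: "r \<in> carrier R \<Longrightarrow> m \<in> carrier M \<Longrightarrow> r \<odot> (\<ominus> m) = \<ominus> (r \<odot> m)"
proof -
  assume r: "r \<in> carrier R" and m: "m \<in> carrier M"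
  have "r \<odot> (\<ominus> m) \<oplus> r \<odot> m = \<zero>"
    using r m by (simp add: smult_rdistr[symmetric] M.l_neg)
  thus ?thesis using r m by (simp add: M.minus_equality)
qed

lemma smult_minus_l: "r \<in> carrier R \<Longrightarrow> m \<in> carrier M \<Longrightarrow> (\<ominus>\<^bsub>R\<^esub> r) \<odot> m = \<ominus> (r \<odot> m)"
proof -
  assume r: "r \<in> carrier R" and m: "m \<in> carrier M"
  have "(\<ominus>\<^bsub>R\<^esub> r) \<odot> m \<oplus> r \<odot> m = \<zero>"
    using r m by (simp add: smult_ldistr[symmetric] R.l_neg)
  thus ?thesis using r m by (simp add: M.minus_equality)
qed

lemma smult_diff: "r \<in> carrier R \<Longrightarrow> m \<in> carrier M \<Longrightarrow> n \<in> carrier M \<Longrightarrow>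
   r \<odot> (m \<ominus> n) = r \<odot> m \<ominus> r \<odot> n"
  by (simp add: M.minus_eq smult_rdistr smult_minus_r)

lemma finsum_smult_l: "finite A \<Longrightarrow> h \<in> A \<rightarrow> carrier R \<Longrightarrow> m \<in> carrier M \<Longrightarrow>
   (finsum R h A) \<odot> m = (\<Oplus>a\<in>A. h a \<odot> m)"
proof (induction A rule: finite_induct)
  case empty then show ?case by simp
next
  case (insert a A)
  then have h: "h \<in> A \<rightarrow> carrier R" "h a \<in> carrier R" by auto
  have "finsum R h (insert a A) = h a \<oplus>\<^bsub>R\<^esub> finsum R h A"
    using insert h by (simp add: R.finsum_insert)
  then have "finsum R h (insert a A) \<odot> m = h a \<odot> m \<oplus> (finsum R h A) \<odot> m"
    using h insert by (simp add: smult_ldistr R.finsum_closed)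
  also have "\<dots> = (\<Oplus>a\<in>insert a A. h a \<odot> m)"
    using insert h by (subst M.finsum_insert) (auto simp: Pi_def)
  finally show ?case .
qed

end

lemma rmodI: "right_module R M \<Longrightarrow> rmod R M" by (simp add: rmod_def)

lemma subm_simps[simp]: "carrier (subm M N) = N" "zero (subm M N) = zero M"
  "add (subm M N) = add M" "smult (subm M N) = smult M"
  "subm (subm M N) Y = subm M Y"
  by (simp_all add: subm_def)

context rmod begin

lemma rsub_carrier: "rsubmod R M N \<Longrightarrow> N \<subseteq> carrier M" by (simp add: rsubmod_def)
lemma rsub_zero: "rsubmod R M N \<Longrightarrow> \<zero> \<in> N" by (simp add: rsubmod_def)
lemma rsub_add: "rsubmod R M N \<Longrightarrow> x \<in> N \<Longrightarrow> y \<in> N \<Longrightarrow> x \<oplus> y \<in> N" by (simp add: rsubmod_def)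
lemma rsub_neg: "rsubmod R M N \<Longrightarrow> x \<in> N \<Longrightarrow> \<ominus> x \<in> N" by (simp add: rsubmod_def)
lemma rsub_smult: "rsubmod R M N \<Longrightarrow> r \<in> carrier R \<Longrightarrow> x \<in> N \<Longrightarrow> r \<odot> x \<in> N" by (simp add: rsubmod_def)
lemma rsub_diff: "rsubmod R M N \<Longrightarrow> x \<in> N \<Longrightarrow> y \<in> N \<Longrightarrow> x \<ominus> y \<in> N"
  by (simp add: M.minus_eq rsub_add rsub_neg)

lemma rsub_full: "rsubmod R M (carrier M)"
  by (auto simp: rsubmod_def)
lemma rsub_triv: "rsubmod R M {\<zero>}"
  by (auto simp: rsubmod_def)
lemma rsub_Int: "rsubmod R M N \<Longrightarrow> rsubmod R M N' \<Longrightarrow> rsubmod R M (N \<inter> N')"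
  by (auto simp: rsubmod_def)

lemma subm_rm: assumes N: "rsubmod R M N" shows "right_module R (subm M N)"
proof -
  have sub: "N \<subseteq> carrier M" using N by (rule rsub_carrier)
  have "abelian_group (subm M N)"
  proof (rule abelian_groupI)
    show "\<And>x y. x \<in> carrier (subm M N) \<Longrightarrow> y \<in> carrier (subm M N) \<Longrightarrow> x \<oplus>\<^bsub>subm M N\<^esub> y \<in> carrier (subm M N)"
      using N by (simp add: rsub_add)
    show "\<zero>\<^bsub>subm M N\<^esub> \<in> carrier (subm M N)" using N by (simp add: rsub_zero)
    show "\<And>x y z. x \<in> carrier (subm M N) \<Longrightarrow> y \<in> carrier (subm M N) \<Longrightarrow> z \<in> carrier (subm M N) \<Longrightarrow>
       x \<oplus>\<^bsub>subm M N\<^esub> y \<oplus>\<^bsub>subm M N\<^esub> z = x \<oplus>\<^bsub>subm M N\<^esub> (y \<oplus>\<^bsub>subm M N\<^esub> z)"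
      using sub by (auto intro: M.a_assoc)
    show "\<And>x y. x \<in> carrier (subm M N) \<Longrightarrow> y \<in> carrier (subm M N) \<Longrightarrow> x \<oplus>\<^bsub>subm M N\<^esub> y = y \<oplus>\<^bsub>subm M N\<^esub> x"
      using sub by (auto intro: M.a_comm)
    show "\<And>x. x \<in> carrier (subm M N) \<Longrightarrow> \<zero>\<^bsub>subm M N\<^esub> \<oplus>\<^bsub>subm M N\<^esub> x = x"
      using sub by auto
    show "\<And>x. x \<in> carrier (subm M N) \<Longrightarrow> \<exists>y\<in>carrier (subm M N). y \<oplus>\<^bsub>subm M N\<^esub> x = \<zero>\<^bsub>subm M N\<^esub>"
    proof -
      fix x assume "x \<in> carrier (subm M N)"
      then show "\<exists>y\<in>carrier (subm M N). y \<oplus>\<^bsub>subm M N\<^esub> x = \<zero>\<^bsub>subm M N\<^esub>"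
        using sub N by (intro bexI[of _ "\<ominus> x"]) (auto simp: M.l_neg rsub_neg)
    qed
  qed
  then show ?thesis using N sub rm
    by (auto simp: right_module_def rsub_smult subset_iff)
qed

lemma subm_inv: assumes N: "rsubmod R M N" and x: "x \<in> N"
  shows "\<ominus>\<^bsub>subm M N\<^esub> x = \<ominus> x"
proof -
  interpret S: abelian_group "subm M N" using subm_rm[OF N] by (simp add: right_module_def)
  have xc: "x \<in> carrier M" using N x rsub_carrier by auto
  show ?thesis
    by (rule S.minus_equality) (use N x xc in \<open>auto simp: rsub_neg M.l_neg\<close>)
qed

lemma rsub_subm_iff: assumes N: "rsubmod R M N"
  shows "rsubmod R (subm M N) Y \<longleftrightarrow> rsubmod R M Y \<and> Y \<subseteq> N"
proof
  assume Y: "rsubmod R (subm M N) Y"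
  then have YN: "Y \<subseteq> N" by (simp add: rsubmod_def)
  then show "rsubmod R M Y \<and> Y \<subseteq> N" using Y N rsub_carrier[OF N]
    by (auto simp: rsubmod_def subm_inv[OF N] subset_iff)
next
  assume "rsubmod R M Y \<and> Y \<subseteq> N"
  then show "rsubmod R (subm M N) Y" using N
    by (auto simp: rsubmod_def subm_inv[OF N] subset_iff)
qed

end

locale rhm =
  fixes R :: "'a ring" and M :: "('a, 'b) module" and N :: "('a, 'b) module" and f :: "'b \<Rightarrow> 'b"
  assumes rmM: "right_module R M" and rmN: "right_module R N" and hom: "rhom R M N f"
begin

sublocale M: rmod R M by (rule rmodI[OF rmM])
sublocale N: rmod R N by (rule rmodI[OF rmN])

lemma f_closed[simp, intro]: "x \<in> carrier M \<Longrightarrow> f x \<in> carrier N"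
  using hom by (auto simp: rhom_def)
lemma f_add: "x \<in> carrier M \<Longrightarrow> y \<in> carrier M \<Longrightarrow> f (x \<oplus>\<^bsub>M\<^esub> y) = f x \<oplus>\<^bsub>N\<^esub> f y"
  using hom by (auto simp: rhom_def)
lemma f_smult: "r \<in> carrier R \<Longrightarrow> x \<in> carrier M \<Longrightarrow> f (r \<odot>\<^bsub>M\<^esub> x) = r \<odot>\<^bsub>N\<^esub> f x"
  using hom by (auto simp: rhom_def)
lemma f_zero[simp]: "f \<zero>\<^bsub>M\<^esub> = \<zero>\<^bsub>N\<^esub>"
proof -
  have "f \<zero>\<^bsub>M\<^esub> = f \<zero>\<^bsub>M\<^esub> \<oplus>\<^bsub>N\<^esub> f \<zero>\<^bsub>M\<^esub>"
    using f_add[of "\<zero>\<^bsub>M\<^esub>" "\<zero>\<^bsub>M\<^esub>"] by simp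
  then show ?thesis using N.M_idem_zero by auto
qed
lemma f_neg: "x \<in> carrier M \<Longrightarrow> f (\<ominus>\<^bsub>M\<^esub> x) = \<ominus>\<^bsub>N\<^esub> f x"
proof -
  assume x: "x \<in> carrier M"
  have "f (\<ominus>\<^bsub>M\<^esub> x) \<oplus>\<^bsub>N\<^esub> f x = \<zero>\<^bsub>N\<^esub>"
    using x by (simp add: f_add[symmetric] M.M.l_neg)
  then show ?thesis using x by (simp add: N.M.minus_equality)
qed
lemma f_diff: "x \<in> carrier M \<Longrightarrow> y \<in> carrier M \<Longrightarrow> f (x \<ominus>\<^bsub>M\<^esub> y) = f x \<ominus>\<^bsub>N\<^esub> f y"
  by (simp add: M.M.minus_eq N.M.minus_eq f_add f_neg)

lemma kern_sub: "rsubmod R M (kern M N f)"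
  by (auto simp: rsubmod_def kern_def f_add f_neg f_smult)

lemma image_sub: "rsubmod R M X \<Longrightarrow> rsubmod R N (f ` X)"
  unfolding rsubmod_def
proof (intro conjI ballI)
  assume X: "X \<subseteq> carrier M \<and> \<zero>\<^bsub>M\<^esub> \<in> X \<and> (\<forall>x\<in>X. \<forall>y\<in>X. x \<oplus>\<^bsub>M\<^esub> y \<in> X) \<and>
    (\<forall>x\<in>X. \<ominus>\<^bsub>M\<^esub> x \<in> X) \<and> (\<forall>r\<in>carrier R. \<forall>x\<in>X. r \<odot>\<^bsub>M\<^esub> x \<in> X)"
  show "f ` X \<subseteq> carrier N" using X by auto
  show "\<zero>\<^bsub>N\<^esub> \<in> f ` X" using X f_zero by (metis image_eqI)
  fix x y assume "x \<in> f ` X" "y \<in> f ` X"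
  then obtain a b where "a \<in> X" "b \<in> X" "x = f a" "y = f b" by auto
  then show "x \<oplus>\<^bsub>N\<^esub> y \<in> f ` X" using X f_add[of a b] by (metis image_eqI subsetD)
next
  assume X: "X \<subseteq> carrier M \<and> \<zero>\<^bsub>M\<^esub> \<in> X \<and> (\<forall>x\<in>X. \<forall>y\<in>X. x \<oplus>\<^bsub>M\<^esub> y \<in> X) \<and>
    (\<forall>x\<in>X. \<ominus>\<^bsub>M\<^esub> x \<in> X) \<and> (\<forall>r\<in>carrier R. \<forall>x\<in>X. r \<odot>\<^bsub>M\<^esub> x \<in> X)"
  fix x assume "x \<in> f ` X"
  then obtain a where "a \<in> X" "x = f a" by auto
  then show "\<ominus>\<^bsub>N\<^esub> x \<in> f ` X" using X f_neg[of a] by (metis image_eqI subsetD)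
next
  assume X: "X \<subseteq> carrier M \<and> \<zero>\<^bsub>M\<^esub> \<in> X \<and> (\<forall>x\<in>X. \<forall>y\<in>X. x \<oplus>\<^bsub>M\<^esub> y \<in> X) \<and>
    (\<forall>x\<in>X. \<ominus>\<^bsub>M\<^esub> x \<in> X) \<and> (\<forall>r\<in>carrier R. \<forall>x\<in>X. r \<odot>\<^bsub>M\<^esub> x \<in> X)"
  fix r x assume "r \<in> carrier R" "x \<in> f ` X"
  then obtain a where "a \<in> X" "x = f a" by auto
  then show "r \<odot>\<^bsub>N\<^esub> x \<in> f ` X" using X f_smult[of r a] \<open>r \<in> carrier R\<close> by (metis image_eqI subsetD)
qed

lemma preimage_sub: "rsubmod R N Z \<Longrightarrow> rsubmod R M {x \<in> carrier M. f x \<in> Z}"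
  by (auto simp: rsubmod_def f_add f_neg f_smult)

lemma restrict: "rsubmod R M X \<Longrightarrow> rsubmod R N Z \<Longrightarrow> f ` X \<subseteq> Z \<Longrightarrow> rhom R (subm M X) (subm N Z) f"
  using hom by (auto simp: rhom_def subset_iff rsubmod_def)

lemma image_zero: "is_zero_mod M \<Longrightarrow> f ` carrier M = carrier N \<Longrightarrow> is_zero_mod N"
  by (auto simp: is_zero_mod_def)

end

lemma rhom_comp: "rhom R M N f \<Longrightarrow> rhom R N P g \<Longrightarrow> rhom R M P (g \<circ> f)"
  by (auto simp: rhom_def Pi_def)

lemma rhom_id: "rhom R M M id"
  by (auto simp: rhom_def)

lemma kern_subm: "kern (subm M X) (subm N Z) f = {x \<in> X. f x = \<zero>\<^bsub>N\<^esub>}"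
  by (simp add: kern_def)

inductive_set kspan :: "'k ring \<Rightarrow> ('k \<Rightarrow> 'a) \<Rightarrow> 'b \<Rightarrow> ('b \<Rightarrow> 'b \<Rightarrow> 'b) \<Rightarrow> ('a \<Rightarrow> 'b \<Rightarrow> 'b) \<Rightarrow> 'b set \<Rightarrow> 'b set"
  for K phi z ad sm T where
  ks0: "z \<in> kspan K phi z ad sm T"
| ks1: "c \<in> carrier K \<Longrightarrow> t \<in> T \<Longrightarrow> sm (phi c) t \<in> kspan K phi z ad sm T"
| ks2: "x \<in> kspan K phi z ad sm T \<Longrightarrow> y \<in> kspan K phi z ad sm T \<Longrightarrow> ad x y \<in> kspan K phi z ad sm T"

abbreviation ksp where "ksp K phi M T \<equiv> kspan K phi (zero M) (add M) (smult M) T"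

lemma (in abelian_group) cancel_helper1:
  "a \<in> carrier G \<Longrightarrow> y \<in> carrier G \<Longrightarrow> z \<in> carrier G \<Longrightarrow> (a \<oplus> y) \<oplus> (\<ominus> a \<oplus> z) = y \<oplus> z"
  by (simp add: a_assoc a_lcomm[of y "\<ominus> a" z] r_neg2)

lemma (in abelian_group) cancel_helper2:
  "n \<in> carrier G \<Longrightarrow> b \<in> carrier G \<Longrightarrow> (n \<oplus> b) \<oplus> \<ominus> b = n"
  by (simp add: a_assoc r_neg)

locale fdm = rmod R M for R :: "'a ring" and M :: "('a, 'b) module" (structure) +
  fixes K :: "'k ring" and phi :: "'k \<Rightarrow> 'a"
  assumes fd: "fd_algebra K R phi"
begin

lemma fieldK: "field K" using fd by (simp add: fd_algebra_def)
sublocale K: field K by (rule fieldK)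

lemma phi_hom: "phi \<in> ring_hom K R" using fd by (simp add: fd_algebra_def)
lemma phi_closed[simp, intro]: "c \<in> carrier K \<Longrightarrow> phi c \<in> carrier R"
  using phi_hom by (rule ring_hom_closed)
lemma phi_mult: "c \<in> carrier K \<Longrightarrow> d \<in> carrier K \<Longrightarrow> phi (c \<otimes>\<^bsub>K\<^esub> d) = phi c \<otimes>\<^bsub>R\<^esub> phi d"
  using phi_hom by (rule ring_hom_mult)
lemma phi_add: "c \<in> carrier K \<Longrightarrow> d \<in> carrier K \<Longrightarrow> phi (c \<oplus>\<^bsub>K\<^esub> d) = phi c \<oplus>\<^bsub>R\<^esub> phi d"
  using phi_hom by (rule ring_hom_add)
lemma phi_zero[simp]: "phi \<zero>\<^bsub>K\<^esub> = \<zero>\<^bsub>R\<^esub>"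
  using ring_hom_zero[OF phi_hom K.is_ring R.ring_axioms] .
lemma phi_neg: "c \<in> carrier K \<Longrightarrow> phi (\<ominus>\<^bsub>K\<^esub> c) = \<ominus>\<^bsub>R\<^esub> phi c"
proof -
  assume c: "c \<in> carrier K"
  have "phi (\<ominus>\<^bsub>K\<^esub> c) \<oplus>\<^bsub>R\<^esub> phi c = \<zero>\<^bsub>R\<^esub>"
    using c by (simp add: phi_add[symmetric] K.l_neg)
  then show ?thesis using c by (simp add: R.minus_equality)
qed
lemma phi_central: "c \<in> carrier K \<Longrightarrow> r \<in> carrier R \<Longrightarrow> phi c \<otimes>\<^bsub>R\<^esub> r = r \<otimes>\<^bsub>R\<^esub> phi c"
  using fd by (simp add: fd_algebra_def)

lemma ksp_carrier: "T \<subseteq> carrier M \<Longrightarrow> ksp K phi M T \<subseteq> carrier M"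
proof
  fix x assume T: "T \<subseteq> carrier M" and x: "x \<in> ksp K phi M T"
  from x show "x \<in> carrier M" by (induction rule: kspan.induct) (use T in auto)
qed

lemma ksp_mono: "T \<subseteq> T' \<Longrightarrow> ksp K phi M T \<subseteq> ksp K phi M T'"
proof
  fix x assume T: "T \<subseteq> T'" and x: "x \<in> ksp K phi M T"
  from x show "x \<in> ksp K phi M T'" by (induction rule: kspan.induct) (use T in \<open>auto intro: kspan.intros\<close>)
qed

lemma ksp_scale: assumes T: "T \<subseteq> carrier M" and c: "c \<in> carrier K"
  shows "x \<in> ksp K phi M T \<Longrightarrow> phi c \<odot> x \<in> ksp K phi M T"
proof (induction rule: kspan.induct)
  case ks0 then show ?case using c by (simp add: kspan.ks0)
next
  case (ks1 d t)
  have "phi c \<odot> (phi d \<odot> t) = phi (d \<otimes>\<^bsub>K\<^esub> c) \<odot> t"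
    using ks1 c T by (auto simp: phi_mult smult_assoc)
  then show ?case using ks1 c by (auto intro: kspan.ks1)
next
  case (ks2 x y)
  have "x \<in> carrier M" "y \<in> carrier M" using ks2 ksp_carrier[OF T] by auto
  then have "phi c \<odot> (x \<oplus> y) = phi c \<odot> x \<oplus> phi c \<odot> y" using c by (simp add: smult_rdistr)
  then show ?case using ks2 by (auto intro: kspan.ks2)
qed

lemma ksp_finsum: assumes T: "T \<subseteq> carrier M"
  shows "finite A \<Longrightarrow> h \<in> A \<rightarrow> ksp K phi M T \<Longrightarrow> finsum M h A \<in> ksp K phi M T"
proof (induction A rule: finite_induct)
  case empty then show ?case by (simp add: kspan.ks0)
next
  case (insert a A)
  then have "h \<in> A \<rightarrow> carrier M" "h a \<in> carrier M" using ksp_carrier[OF T] by auto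
  then have "finsum M h (insert a A) = h a \<oplus> finsum M h A"
    using insert by (simp add: M.finsum_insert)
  then show ?case using insert by (auto intro: kspan.ks2)
qed

lemma ksp_to_finsum: assumes T: "T \<subseteq> carrier M" "finite T"
  shows "x \<in> ksp K phi M T \<Longrightarrow> \<exists>f\<in>T \<rightarrow> carrier R. x = (\<Oplus>s\<in>T. f s \<odot> s)"
proof (induction rule: kspan.induct)
  case ks0
  have "(\<Oplus>s\<in>T. \<zero>\<^bsub>R\<^esub> \<odot> s) = (\<Oplus>s\<in>T. \<zero>)"
    using T by (intro M.finsum_cong) (auto simp: subset_iff)
  then show ?case using T by (intro bexI[of _ "\<lambda>_. \<zero>\<^bsub>R\<^esub>"]) (auto simp: M.finsum_zero)
next
  case (ks1 c t)
  define f where "f = (\<lambda>s. if s = t then phi c else \<zero>\<^bsub>R\<^esub>)"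
  have f: "f \<in> T \<rightarrow> carrier R" using ks1 by (auto simp: f_def)
  have Tt: "T = insert t (T - {t})" using ks1 by auto
  have "(\<Oplus>s\<in>T. f s \<odot> s) = f t \<odot> t \<oplus> (\<Oplus>s\<in>T - {t}. f s \<odot> s)"
    using T f ks1 by (subst Tt, subst M.finsum_insert) (auto simp: Pi_def)
  also have "(\<Oplus>s\<in>T - {t}. f s \<odot> s) = (\<Oplus>s\<in>T - {t}. \<zero>)"
    using T by (intro M.finsum_cong) (auto simp: f_def subset_iff)
  also have "\<dots> = \<zero>" by (simp add: M.finsum_zero)
  finally have "(\<Oplus>s\<in>T. f s \<odot> s) = phi c \<odot> t" using ks1 T by (auto simp: f_def)
  then show ?case using f by (intro bexI[of _ f]) auto
next
  case (ks2 x y)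
  then obtain f g where f: "f \<in> T \<rightarrow> carrier R" "x = (\<Oplus>s\<in>T. f s \<odot> s)"
    and g: "g \<in> T \<rightarrow> carrier R" "y = (\<Oplus>s\<in>T. g s \<odot> s)" by auto
  have "(\<Oplus>s\<in>T. (f s \<oplus>\<^bsub>R\<^esub> g s) \<odot> s) = (\<Oplus>s\<in>T. f s \<odot> s \<oplus> g s \<odot> s)"
    using T f g by (intro M.finsum_cong) (auto simp: smult_ldistr subset_iff Pi_iff)
  also have "\<dots> = x \<oplus> y"
    using T f g by (simp add: M.finsum_addf Pi_def subset_iff)
  finally show ?case using f g by (intro bexI[of _ "\<lambda>s. f s \<oplus>\<^bsub>R\<^esub> g s"]) auto
qed

lemma fg_span: assumes fg: "fin_gen R M"
  shows "\<exists>T. finite T \<and> T \<subseteq> carrier M \<and> carrier M \<subseteq> ksp K phi M T"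
proof -
  obtain B where B: "finite B" "B \<subseteq> carrier R"
    "\<And>r. r \<in> carrier R \<Longrightarrow> \<exists>c\<in>B \<rightarrow> carrier K. r = (\<Oplus>\<^bsub>R\<^esub> b\<in>B. phi (c b) \<otimes>\<^bsub>R\<^esub> b)"
    using fd unfolding fd_algebra_def by blast
  obtain S where S: "finite S" "S \<subseteq> carrier M"
    "\<And>m. m \<in> carrier M \<Longrightarrow> \<exists>f\<in>S \<rightarrow> carrier R. m = (\<Oplus>s\<in>S. f s \<odot> s)"
    using fg unfolding fin_gen_def by blast
  define T where "T = (\<lambda>p. fst p \<odot> snd p) ` (B \<times> S)"
  have Tc: "T \<subseteq> carrier M" using B(2) S(2) by (auto simp: T_def intro!: smult_closed)
  have Tf: "finite T" using B S by (simp add: T_def)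
  have trm: "r \<odot> s \<in> ksp K phi M T" if r: "r \<in> carrier R" and s: "s \<in> S" for r s
  proof -
    obtain c where c: "c \<in> B \<rightarrow> carrier K" "r = (\<Oplus>\<^bsub>R\<^esub> b\<in>B. phi (c b) \<otimes>\<^bsub>R\<^esub> b)"
      using B(3)[OF r] by blast
    have sc: "s \<in> carrier M" using s S by auto
    have "r \<odot> s = (\<Oplus>b\<in>B. (phi (c b) \<otimes>\<^bsub>R\<^esub> b) \<odot> s)"
      using c B sc by (simp add: finsum_smult_l Pi_iff subset_iff)
    also have "\<dots> \<in> ksp K phi M T"
    proof (rule ksp_finsum[OF Tc B(1)])
      show "(\<lambda>b. (phi (c b) \<otimes>\<^bsub>R\<^esub> b) \<odot> s) \<in> B \<rightarrow> ksp K phi M T"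
      proof
        fix b assume b: "b \<in> B"
        have cb: "c b \<in> carrier K" and bR: "b \<in> carrier R" using b c B by auto
        have "(phi (c b) \<otimes>\<^bsub>R\<^esub> b) \<odot> s = (b \<otimes>\<^bsub>R\<^esub> phi (c b)) \<odot> s"
          using phi_central[OF cb bR] by simp
        also have "\<dots> = phi (c b) \<odot> (b \<odot> s)" using cb bR sc by (simp add: smult_assoc)
        finally have eqq: "(phi (c b) \<otimes>\<^bsub>R\<^esub> b) \<odot> s = phi (c b) \<odot> (b \<odot> s)" .
        show "(phi (c b) \<otimes>\<^bsub>R\<^esub> b) \<odot> s \<in> ksp K phi M T"
        proof -
          have "b \<odot> s \<in> T" using b s unfolding T_def by (auto intro!: image_eqI[of _ _ "(b, s)"])
          then show ?thesis using eqq cb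
            by (auto intro!: kspan.ks1)
        qed
      qed
    qed
    finally show ?thesis .
  qed
  have "carrier M \<subseteq> ksp K phi M T"
  proof
    fix m assume "m \<in> carrier M"
    then obtain f where f: "f \<in> S \<rightarrow> carrier R" "m = (\<Oplus>s\<in>S. f s \<odot> s)" using S(3) by blast
    show "m \<in> ksp K phi M T" unfolding f(2)
      by (rule ksp_finsum[OF Tc S(1)]) (use f trm in auto)
  qed
  then show ?thesis using Tc Tf by blast
qed

lemma ksp_empty: "x \<in> ksp K phi M {} \<Longrightarrow> x = \<zero>"
  by (induction rule: kspan.induct) auto

lemma ksp_decomp: assumes T: "T \<subseteq> carrier M" and t: "t \<in> carrier M"
  shows "x \<in> ksp K phi M (insert t T) \<Longrightarrow> \<exists>c\<in>carrier K. \<exists>y\<in>ksp K phi M T. x = phi c \<odot> t \<oplus> y"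
proof (induction rule: kspan.induct)
  case ks0
  show ?case using t by (intro bexI[of _ "\<zero>\<^bsub>K\<^esub>"] bexI[of _ "\<zero>"]) (auto intro: kspan.ks0)
next
  case (ks1 c s)
  show ?case
  proof (cases "s = t")
    case True then show ?thesis using ks1 t by (intro bexI[of _ c] bexI[of _ "\<zero>"]) (auto intro: kspan.ks0)
  next
    case False
    then have "s \<in> T" using ks1 by auto
    then show ?thesis using ks1 t T
      by (intro bexI[of _ "\<zero>\<^bsub>K\<^esub>"] bexI[of _ "phi c \<odot> s"]) (auto intro: kspan.ks1)
  qed
next
  case (ks2 x y)
  then obtain c1 y1 c2 y2 where 1: "c1 \<in> carrier K" "y1 \<in> ksp K phi M T" "x = phi c1 \<odot> t \<oplus> y1"
    and 2: "c2 \<in> carrier K" "y2 \<in> ksp K phi M T" "y = phi c2 \<odot> t \<oplus> y2" by blast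
  have y1: "y1 \<in> carrier M" and y2: "y2 \<in> carrier M" using 1 2 ksp_carrier[OF T] by auto
  have "x \<oplus> y = (phi c1 \<odot> t \<oplus> phi c2 \<odot> t) \<oplus> (y1 \<oplus> y2)"
    using 1 2 y1 y2 t by (simp add: M.a_ac)
  also have "\<dots> = phi (c1 \<oplus>\<^bsub>K\<^esub> c2) \<odot> t \<oplus> (y1 \<oplus> y2)"
    using 1 2 t by (simp add: phi_add smult_ldistr)
  finally show ?case using 1 2 by (intro bexI[of _ "c1 \<oplus>\<^bsub>K\<^esub> c2"] bexI[of _ "y1 \<oplus> y2"]) (auto intro: kspan.ks2)
qed

lemma subspace_fin:
  assumes "finite T" "T \<subseteq> carrier M"
  shows "N \<subseteq> carrier M \<Longrightarrow> \<zero> \<in> N \<Longrightarrow> (\<forall>x\<in>N. \<forall>y\<in>N. x \<oplus> y \<in> N) \<Longrightarrow>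
    (\<forall>c\<in>carrier K. \<forall>x\<in>N. phi c \<odot> x \<in> N) \<Longrightarrow> N \<subseteq> ksp K phi M T \<Longrightarrow>
    \<exists>F. finite F \<and> F \<subseteq> N \<and> N \<subseteq> ksp K phi M F"
  using assms
proof (induction T arbitrary: N rule: finite_induct)
  case empty
  then have "N \<subseteq> ksp K phi M {}" by (auto dest: ksp_empty intro: kspan.ks0)
  then show ?case by (intro exI[of _ "{}"]) auto
next
  case (insert t T)
  have tc: "t \<in> carrier M" and Tc: "T \<subseteq> carrier M" using insert by auto
  define N' where "N' = N \<inter> ksp K phi M T"
  have "\<exists>F. finite F \<and> F \<subseteq> N' \<and> N' \<subseteq> ksp K phi M F"
  proof (rule insert.IH)
    show "N' \<subseteq> carrier M" using insert by (auto simp: N'_def)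
    show "\<zero> \<in> N'" using insert by (auto simp: N'_def intro: kspan.ks0)
    show "\<forall>x\<in>N'. \<forall>y\<in>N'. x \<oplus> y \<in> N'" using insert by (auto simp: N'_def intro: kspan.ks2)
    show "\<forall>c\<in>carrier K. \<forall>x\<in>N'. phi c \<odot> x \<in> N'" using insert by (auto simp: N'_def intro: ksp_scale[OF Tc])
    show "N' \<subseteq> ksp K phi M T" by (auto simp: N'_def)
  qed (use Tc in auto)
  then obtain F' where F': "finite F'" "F' \<subseteq> N'" "N' \<subseteq> ksp K phi M F'" by blast
  show ?case
  proof (cases "N \<subseteq> ksp K phi M T")
    case True
    then have "N' = N" by (auto simp: N'_def)
    then show ?thesis using F' by blast
  next
    case False
    then obtain n0 where n0: "n0 \<in> N" "n0 \<notin> ksp K phi M T" by blast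
    then obtain c0 y0 where c0: "c0 \<in> carrier K" "y0 \<in> ksp K phi M T" "n0 = phi c0 \<odot> t \<oplus> y0"
      using ksp_decomp[OF Tc tc] insert.prems(5) by blast
    have y0c: "y0 \<in> carrier M" using c0 ksp_carrier[OF Tc] by auto
    have c0nz: "c0 \<noteq> \<zero>\<^bsub>K\<^esub>"
    proof
      assume "c0 = \<zero>\<^bsub>K\<^esub>"
      then have "n0 = y0" using c0 tc y0c by simp
      then show False using n0 c0 by simp
    qed
    have c0U: "c0 \<in> Units K" using c0 c0nz K.field_Units by auto
    have n0c: "n0 \<in> carrier M" using n0 insert by auto
    have "N \<subseteq> ksp K phi M (insert n0 F')"
    proof
      fix n assume n: "n \<in> N"
      then have nc: "n \<in> carrier M" using insert by auto
      obtain c y where cy: "c \<in> carrier K" "y \<in> ksp K phi M T" "n = phi c \<odot> t \<oplus> y"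
        using ksp_decomp[OF Tc tc] insert.prems(5) n by blast
      have yc: "y \<in> carrier M" using cy ksp_carrier[OF Tc] by auto
      define d where "d = \<ominus>\<^bsub>K\<^esub> (c \<otimes>\<^bsub>K\<^esub> inv\<^bsub>K\<^esub> c0)"
      have ic0: "inv\<^bsub>K\<^esub> c0 \<in> carrier K" using c0U by simp
      have dK: "d \<in> carrier K" using cy ic0 by (simp add: d_def)
      have cd: "c0 \<otimes>\<^bsub>K\<^esub> d = \<ominus>\<^bsub>K\<^esub> c"
      proof -
        have "c0 \<otimes>\<^bsub>K\<^esub> (c \<otimes>\<^bsub>K\<^esub> inv\<^bsub>K\<^esub> c0) = c \<otimes>\<^bsub>K\<^esub> (c0 \<otimes>\<^bsub>K\<^esub> inv\<^bsub>K\<^esub> c0)"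
          using c0 cy ic0 by (simp add: K.m_lcomm)
        also have "\<dots> = c" using c0U cy by simp
        finally show ?thesis using c0 cy ic0 by (simp add: d_def K.r_minus)
      qed
      define w where "w = n \<oplus> phi d \<odot> n0"
      have wN: "w \<in> N" using insert.prems n n0 dK by (simp add: w_def)
      have "phi d \<odot> n0 = phi d \<odot> (phi c0 \<odot> t) \<oplus> phi d \<odot> y0"
        using c0 dK tc y0c by (simp add: smult_rdistr)
      also have "phi d \<odot> (phi c0 \<odot> t) = phi (c0 \<otimes>\<^bsub>K\<^esub> d) \<odot> t"
        using c0 dK tc by (simp add: phi_mult smult_assoc)
      also have "\<dots> = \<ominus> (phi c \<odot> t)" using cd cy tc by (simp add: phi_neg smult_minus_l)
      finally have "w = (phi c \<odot> t \<oplus> y) \<oplus> (\<ominus> (phi c \<odot> t) \<oplus> phi d \<odot> y0)"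
        by (simp add: w_def cy(3))
      also have "\<dots> = y \<oplus> phi d \<odot> y0"
        using cy tc yc y0c dK by (intro M.cancel_helper1) auto
      finally have "w \<in> ksp K phi M T"
        using cy(2) c0(2) dK by (auto intro!: kspan.ks2 ksp_scale[OF Tc])
      then have "w \<in> N'" using wN by (simp add: N'_def)
      then have wF: "w \<in> ksp K phi M (insert n0 F')" using F' ksp_mono[of F' "insert n0 F'"] by auto
      have "w \<oplus> phi (\<ominus>\<^bsub>K\<^esub> d) \<odot> n0 = (n \<oplus> phi d \<odot> n0) \<oplus> \<ominus> (phi d \<odot> n0)"
        using dK n0c by (simp add: w_def phi_neg smult_minus_l)
      also have "\<dots> = n" using nc n0c dK by (intro M.cancel_helper2) auto
      finally have "n = w \<oplus> phi (\<ominus>\<^bsub>K\<^esub> d) \<odot> n0" by simp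
      then show "n \<in> ksp K phi M (insert n0 F')"
        using wF dK by (auto intro!: kspan.ks2 kspan.ks1)
    qed
    then show ?thesis using F' n0 by (intro exI[of _ "insert n0 F'"]) (auto simp: N'_def)
  qed
qed

lemma sub_fin_gen: assumes fg: "fin_gen R M" and N: "rsubmod R M N"
  shows "fin_gen R (subm M N)"
proof -
  obtain T where T: "finite T" "T \<subseteq> carrier M" "carrier M \<subseteq> ksp K phi M T"
    using fg_span[OF fg] by blast
  have Nc: "N \<subseteq> carrier M" using N by (rule rsub_carrier)
  obtain F where F: "finite F" "F \<subseteq> N" "N \<subseteq> ksp K phi M F"
    using subspace_fin[OF T(1,2), of N] N T(3) Nc
    by (auto simp: rsub_zero rsub_add rsub_smult)
  interpret S: fdm R "subm M N" K phi
    by (unfold_locales) (auto simp: rmod_def subm_rm[OF N] fd)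
  have "\<forall>m\<in>carrier (subm M N). \<exists>f\<in>F \<rightarrow> carrier R. m = finsum (subm M N) (\<lambda>s. f s \<odot>\<^bsub>subm M N\<^esub> s) F"
  proof
    fix m assume "m \<in> carrier (subm M N)"
    then have "m \<in> ksp K phi (subm M N) F" using F by auto
    then show "\<exists>f\<in>F \<rightarrow> carrier R. m = finsum (subm M N) (\<lambda>s. f s \<odot>\<^bsub>subm M N\<^esub> s) F"
      using S.ksp_to_finsum[of F m] F by auto
  qed
  then show ?thesis unfolding fin_gen_def using F by (intro exI[of _ F]) auto
qed

lemma sub_modL: "modL R M \<Longrightarrow> rsubmod R M N \<Longrightarrow> modL R (subm M N)"
  by (simp add: modL_def sub_fin_gen subm_rm)

end

context abelian_group begin
lemma G0: "y \<in> carrier G \<Longrightarrow> z \<in> carrier G \<Longrightarrow> y \<oplus> (z \<oplus> \<ominus> y) = z"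
  by (simp add: a_lcomm[of y z] r_neg2 r_neg)
lemma G1: "a \<in> carrier G \<Longrightarrow> b \<in> carrier G \<Longrightarrow> \<ominus> (a \<ominus> b) = b \<ominus> a"
  by (simp add: a_minus_def minus_add minus_minus a_comm)
lemma G2: "a \<in> carrier G \<Longrightarrow> b \<in> carrier G \<Longrightarrow> c \<in> carrier G \<Longrightarrow> (a \<ominus> b) \<oplus> (b \<ominus> c) = a \<ominus> c"
  by (simp add: a_minus_def a_assoc r_neg1)
lemma G3: "x \<in> carrier G \<Longrightarrow> x' \<in> carrier G \<Longrightarrow> y \<in> carrier G \<Longrightarrow> (x \<oplus> y) \<ominus> (x' \<oplus> y) = x \<ominus> x'"
  by (simp add: a_minus_def minus_add a_ac G0)
lemma G4: "a \<in> carrier G \<Longrightarrow> b \<in> carrier G \<Longrightarrow> c \<in> carrier G \<Longrightarrow> (a \<ominus> c) \<ominus> (b \<ominus> c) = a \<ominus> b"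
  by (simp add: a_minus_def minus_add minus_minus a_ac G0)
end

definition qrep :: "('a, 'b) module \<Rightarrow> 'b set \<Rightarrow> 'b \<Rightarrow> 'b" where
  "qrep M S x = (SOME y. y \<in> carrier M \<and> x \<ominus>\<^bsub>M\<^esub> y \<in> S)"

definition qmod :: "('a, 'b) module \<Rightarrow> 'b set \<Rightarrow> ('a, 'b) module" where
  "qmod M S = M\<lparr>carrier := qrep M S ` carrier M, add := \<lambda>x y. qrep M S (x \<oplus>\<^bsub>M\<^esub> y),
     zero := qrep M S \<zero>\<^bsub>M\<^esub>, smult := \<lambda>r x. qrep M S (r \<odot>\<^bsub>M\<^esub> x)\<rparr>"

lemma qmod_simps[simp]: "carrier (qmod M S) = qrep M S ` carrier M"
  "add (qmod M S) = (\<lambda>x y. qrep M S (x \<oplus>\<^bsub>M\<^esub> y))"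
  "zero (qmod M S) = qrep M S \<zero>\<^bsub>M\<^esub>"
  "smult (qmod M S) = (\<lambda>r x. qrep M S (r \<odot>\<^bsub>M\<^esub> x))"
  by (simp_all add: qmod_def)

locale qloc = rmod R M for R :: "'a ring" and M :: "('a, 'b) module" (structure) +
  fixes S assumes S: "rsubmod R M S"
begin

abbreviation "\<rho> \<equiv> qrep M S"

lemma Sc: "S \<subseteq> carrier M" using S by (rule rsub_carrier)

lemma rho_rel: "x \<in> carrier M \<Longrightarrow> \<rho> x \<in> carrier M \<and> x \<ominus> \<rho> x \<in> S"
  unfolding qrep_def by (rule someI[of _ x]) (simp add: M.r_neg M.minus_eq rsub_zero[OF S])

lemma rho_closed[simp, intro]: "x \<in> carrier M \<Longrightarrow> \<rho> x \<in> carrier M" using rho_rel by blast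

lemma rho_eq: assumes a: "a \<in> carrier M" and b: "b \<in> carrier M" and ab: "a \<ominus> b \<in> S"
  shows "\<rho> a = \<rho> b"
proof -
  have "(\<lambda>y. y \<in> carrier M \<and> a \<ominus> y \<in> S) = (\<lambda>y. y \<in> carrier M \<and> b \<ominus> y \<in> S)"
  proof (intro ext iffI conjI)
    fix y assume y: "y \<in> carrier M \<and> a \<ominus> y \<in> S"
    then have "\<ominus> (a \<ominus> b) \<oplus> (a \<ominus> y) \<in> S" using ab S by (simp add: rsub_add rsub_neg)
    moreover have "\<ominus> (a \<ominus> b) \<oplus> (a \<ominus> y) = b \<ominus> y" using a b y by (simp add: M.G1 M.G2)
    ultimately show "b \<ominus> y \<in> S" by simp
  next
    fix y assume y: "y \<in> carrier M \<and> b \<ominus> y \<in> S"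
    then have "(a \<ominus> b) \<oplus> (b \<ominus> y) \<in> S" using ab S by (simp add: rsub_add)
    moreover have "(a \<ominus> b) \<oplus> (b \<ominus> y) = a \<ominus> y" using a b y by (simp add: M.G2)
    ultimately show "a \<ominus> y \<in> S" by simp
  qed auto
  then show ?thesis by (simp add: qrep_def)
qed

lemma rho_eq_iff: assumes a: "a \<in> carrier M" and b: "b \<in> carrier M"
  shows "\<rho> a = \<rho> b \<longleftrightarrow> a \<ominus> b \<in> S"
proof
  assume e: "\<rho> a = \<rho> b"
  have "(a \<ominus> \<rho> a) \<ominus> (b \<ominus> \<rho> a) \<in> S" using rho_rel[OF a] rho_rel[OF b] e S by (simp add: rsub_diff)
  moreover have "(a \<ominus> \<rho> a) \<ominus> (b \<ominus> \<rho> a) = a \<ominus> b" using a b by (simp add: M.G4)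
  ultimately show "a \<ominus> b \<in> S" by simp
qed (use a b rho_eq in auto)

lemma rho_rho[simp]: "a \<in> carrier M \<Longrightarrow> \<rho> (\<rho> a) = \<rho> a"
proof -
  assume a: "a \<in> carrier M"
  have "\<rho> a \<ominus> a \<in> S" using rho_rel[OF a] S M.G1[of a "\<rho> a"] a by (metis rho_closed rsub_neg)
  then show ?thesis using a by (intro rho_eq) auto
qed

lemma rho_addl[simp]: "a \<in> carrier M \<Longrightarrow> b \<in> carrier M \<Longrightarrow> \<rho> (\<rho> a \<oplus> b) = \<rho> (a \<oplus> b)"
proof -
  assume a: "a \<in> carrier M" and b: "b \<in> carrier M"
  have "\<rho> a \<ominus> a \<in> S" using rho_rel[OF a] S M.G1[of a "\<rho> a"] a by (metis rho_closed rsub_neg)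
  moreover have "(\<rho> a \<oplus> b) \<ominus> (a \<oplus> b) = \<rho> a \<ominus> a" using a b by (simp add: M.G3)
  ultimately show ?thesis using a b by (intro rho_eq) auto
qed

lemma rho_addr[simp]: "a \<in> carrier M \<Longrightarrow> b \<in> carrier M \<Longrightarrow> \<rho> (a \<oplus> \<rho> b) = \<rho> (a \<oplus> b)"
  by (metis M.a_comm rho_addl rho_closed)

lemma rho_smult[simp]: "r \<in> carrier R \<Longrightarrow> a \<in> carrier M \<Longrightarrow> \<rho> (r \<odot> \<rho> a) = \<rho> (r \<odot> a)"
proof -
  assume r: "r \<in> carrier R" and a: "a \<in> carrier M"
  have "\<rho> a \<ominus> a \<in> S" using rho_rel[OF a] S M.G1[of a "\<rho> a"] a by (metis rho_closed rsub_neg)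
  then have "r \<odot> (\<rho> a \<ominus> a) \<in> S" using r S by (simp add: rsub_smult)
  then show ?thesis using r a by (intro rho_eq) (auto simp: smult_diff)
qed

lemma qcarrier_iff: "u \<in> carrier (qmod M S) \<longleftrightarrow> u \<in> carrier M \<and> \<rho> u = u"
  by auto (metis image_eqI rho_closed)

lemma q_rm: "right_module R (qmod M S)"
proof -
  note qc = qcarrier_iff
  have ag: "abelian_group (qmod M S)"
  proof (rule abelian_groupI)
    fix x y assume "x \<in> carrier (qmod M S)" "y \<in> carrier (qmod M S)"
    then show "x \<oplus>\<^bsub>qmod M S\<^esub> y \<in> carrier (qmod M S)" by (auto simp: qc)
  next
    show "\<zero>\<^bsub>qmod M S\<^esub> \<in> carrier (qmod M S)" by (auto simp: qc)
  next
    fix x y z assume "x \<in> carrier (qmod M S)" "y \<in> carrier (qmod M S)" "z \<in> carrier (qmod M S)"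
    then have "x \<in> carrier M" "y \<in> carrier M" "z \<in> carrier M" by (auto simp: qc)
    then show "x \<oplus>\<^bsub>qmod M S\<^esub> y \<oplus>\<^bsub>qmod M S\<^esub> z = x \<oplus>\<^bsub>qmod M S\<^esub> (y \<oplus>\<^bsub>qmod M S\<^esub> z)"
      by (simp add: M.a_assoc)
  next
    fix x y assume "x \<in> carrier (qmod M S)" "y \<in> carrier (qmod M S)"
    then have "x \<in> carrier M" "y \<in> carrier M" by (auto simp: qc)
    then show "x \<oplus>\<^bsub>qmod M S\<^esub> y = y \<oplus>\<^bsub>qmod M S\<^esub> x" by (simp add: M.a_comm)
  next
    fix x assume "x \<in> carrier (qmod M S)"
    then have "x \<in> carrier M" "\<rho> x = x" by (auto simp only: qc)
    then show "\<zero>\<^bsub>qmod M S\<^esub> \<oplus>\<^bsub>qmod M S\<^esub> x = x" by simp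
  next
    fix x assume "x \<in> carrier (qmod M S)"
    then have x: "x \<in> carrier M" "\<rho> x = x" by (auto simp only: qc)
    show "\<exists>y\<in>carrier (qmod M S). y \<oplus>\<^bsub>qmod M S\<^esub> x = \<zero>\<^bsub>qmod M S\<^esub>"
      using x by (intro bexI[of _ "\<rho> (\<ominus> x)"]) (auto simp: M.l_neg)
  qed
  have "\<forall>m\<in>carrier (qmod M S). \<one>\<^bsub>R\<^esub> \<odot>\<^bsub>qmod M S\<^esub> m = m"
  proof
    fix x assume "x \<in> carrier (qmod M S)"
    then have x: "x \<in> carrier M" "\<rho> x = x" by (auto simp only: qc)
    then show "\<one>\<^bsub>R\<^esub> \<odot>\<^bsub>qmod M S\<^esub> x = x" by simp
  qed
  moreover have "\<forall>r\<in>carrier R. \<forall>s\<in>carrier R. \<forall>m\<in>carrier (qmod M S).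
         (r \<oplus>\<^bsub>R\<^esub> s) \<odot>\<^bsub>qmod M S\<^esub> m = (r \<odot>\<^bsub>qmod M S\<^esub> m) \<oplus>\<^bsub>qmod M S\<^esub> (s \<odot>\<^bsub>qmod M S\<^esub> m)"
  proof (intro ballI)
    fix r s x assume r: "r \<in> carrier R" and s: "s \<in> carrier R" and "x \<in> carrier (qmod M S)"
    then have x: "x \<in> carrier M" "\<rho> x = x" by (auto simp only: qc)
    show "(r \<oplus>\<^bsub>R\<^esub> s) \<odot>\<^bsub>qmod M S\<^esub> x = (r \<odot>\<^bsub>qmod M S\<^esub> x) \<oplus>\<^bsub>qmod M S\<^esub> (s \<odot>\<^bsub>qmod M S\<^esub> x)"
      using r s x by (simp add: smult_ldistr)
  qed
  moreover have "\<forall>r\<in>carrier R. \<forall>m\<in>carrier (qmod M S). \<forall>n\<in>carrier (qmod M S).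
         r \<odot>\<^bsub>qmod M S\<^esub> (m \<oplus>\<^bsub>qmod M S\<^esub> n) = (r \<odot>\<^bsub>qmod M S\<^esub> m) \<oplus>\<^bsub>qmod M S\<^esub> (r \<odot>\<^bsub>qmod M S\<^esub> n)"
  proof (intro ballI)
    fix r x y assume r: "r \<in> carrier R" and "x \<in> carrier (qmod M S)" "y \<in> carrier (qmod M S)"
    then have x: "x \<in> carrier M" "y \<in> carrier M" by (auto simp only: qc)
    show "r \<odot>\<^bsub>qmod M S\<^esub> (x \<oplus>\<^bsub>qmod M S\<^esub> y) = (r \<odot>\<^bsub>qmod M S\<^esub> x) \<oplus>\<^bsub>qmod M S\<^esub> (r \<odot>\<^bsub>qmod M S\<^esub> y)"
      using r x by (simp add: smult_rdistr)
  qed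
  moreover have "\<forall>r\<in>carrier R. \<forall>s\<in>carrier R. \<forall>m\<in>carrier (qmod M S).
         (r \<otimes>\<^bsub>R\<^esub> s) \<odot>\<^bsub>qmod M S\<^esub> m = s \<odot>\<^bsub>qmod M S\<^esub> (r \<odot>\<^bsub>qmod M S\<^esub> m)"
  proof (intro ballI)
    fix r s x assume r: "r \<in> carrier R" and s: "s \<in> carrier R" and "x \<in> carrier (qmod M S)"
    then have x: "x \<in> carrier M" by (auto simp only: qc)
    show "(r \<otimes>\<^bsub>R\<^esub> s) \<odot>\<^bsub>qmod M S\<^esub> x = s \<odot>\<^bsub>qmod M S\<^esub> (r \<odot>\<^bsub>qmod M S\<^esub> x)"
      using r s x by (simp add: smult_assoc)
  qed
  moreover have "\<forall>r\<in>carrier R. \<forall>m\<in>carrier (qmod M S). r \<odot>\<^bsub>qmod M S\<^esub> m \<in> carrier (qmod M S)"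
    by (auto simp: qc)
  ultimately show ?thesis unfolding right_module_def using ag R.ring_axioms by blast
qed

lemma q_hom: "rhom R M (qmod M S) \<rho>"
  unfolding rhom_def by (auto simp: qcarrier_iff)

lemma q_surj: "\<rho> ` carrier M = carrier (qmod M S)" by simp

lemma q_kern: "kern M (qmod M S) \<rho> = S"
proof -
  have z: "\<ominus> \<zero> = \<zero>" by (rule M.minus_equality) auto
  have "x \<in> carrier M \<Longrightarrow> \<rho> x = \<rho> \<zero> \<longleftrightarrow> x \<in> S" for x
    by (simp add: rho_eq_iff M.minus_eq z)
  then show ?thesis using Sc by (auto simp: kern_def)
qed

end

lemma (in fdm) image_fin_gen:
  assumes fg: "fin_gen R M" and N: "right_module R N" and h: "rhom R M N f" and surj: "f ` carrier M = carrier N"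
  shows "fin_gen R N"
proof -
  interpret H: rhm R M N f using rm N h by (simp add: rhm_def)
  interpret N': fdm R N K phi by (unfold_locales) (auto simp: rmod_def N fd)
  obtain T where T: "finite T" "T \<subseteq> carrier M" "carrier M \<subseteq> ksp K phi M T"
    using fg_span[OF fg] by blast
  have img: "f x \<in> ksp K phi N (f ` T)" if x: "x \<in> ksp K phi M T" for x
    using x
  proof (induction rule: kspan.induct)
    case ks0 then show ?case by (simp add: kspan.ks0)
  next
    case (ks1 c t)
    then have "f (phi c \<odot> t) = phi c \<odot>\<^bsub>N\<^esub> f t" using T by (auto simp: H.f_smult)
    then show ?case using ks1 by (auto intro: kspan.ks1)
  next
    case (ks2 x y)
    then have "f (x \<oplus> y) = f x \<oplus>\<^bsub>N\<^esub> f y" using ksp_carrier[OF T(2)] by (intro H.f_add) auto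
    then show ?case using ks2 by (auto intro: kspan.ks2)
  qed
  have fT: "finite (f ` T)" "f ` T \<subseteq> carrier N" using T by auto
  have "\<forall>n\<in>carrier N. \<exists>g\<in>f ` T \<rightarrow> carrier R. n = finsum N (\<lambda>s. g s \<odot>\<^bsub>N\<^esub> s) (f ` T)"
  proof
    fix n assume "n \<in> carrier N"
    then obtain m where "m \<in> carrier M" "n = f m" using surj by blast
    then have "n \<in> ksp K phi N (f ` T)" using img T by auto
    then show "\<exists>g\<in>f ` T \<rightarrow> carrier R. n = finsum N (\<lambda>s. g s \<odot>\<^bsub>N\<^esub> s) (f ` T)"
      using N'.ksp_to_finsum[OF fT(2,1)] by blast
  qed
  then show ?thesis unfolding fin_gen_def using fT by blast
qed

lemma quot_exists:
  assumes fd: "fd_algebra K R phi" and M: "modL R M" and S: "rsubmod R M S"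
  shows "\<exists>Q q. modL R Q \<and> rhom R M Q q \<and> q ` carrier M = carrier Q \<and> kern M Q q = S"
proof -
  interpret qloc R M S using M S by (simp add: qloc_def qloc_axioms_def rmod_def modL_def)
  interpret fdm R M K phi using M fd by (simp add: fdm_def fdm_axioms_def rmod_def modL_def)
  have "fin_gen R (qmod M S)"
    using image_fin_gen[OF _ q_rm q_hom q_surj] M by (simp add: modL_def)
  then show ?thesis using q_rm q_hom q_surj q_kern
    by (intro exI[of _ "qmod M S"] exI[of _ "qrep M S"]) (simp add: modL_def)
qed

lemma (in rhm) eq_by_kern:
  assumes x: "x \<in> carrier M" and y: "y \<in> carrier M" and k: "x \<ominus>\<^bsub>M\<^esub> y \<in> kern M N f"
  shows "f x = f y"
proof -
  have "f x = f ((x \<ominus>\<^bsub>M\<^esub> y) \<oplus>\<^bsub>M\<^esub> y)"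
    using x y by (simp add: M.M.minus_eq M.M.a_assoc M.M.l_neg)
  also have "\<dots> = f (x \<ominus>\<^bsub>M\<^esub> y) \<oplus>\<^bsub>N\<^esub> f y" using x y by (simp add: f_add)
  also have "\<dots> = f y" using k y by (simp add: kern_def)
  finally show ?thesis .
qed

lemma (in rhm) kern_by_eq:
  assumes x: "x \<in> carrier M" and y: "y \<in> carrier M" and e: "f x = f y"
  shows "x \<ominus>\<^bsub>M\<^esub> y \<in> kern M N f"
  using x y e by (simp add: kern_def f_diff N.M.minus_eq N.M.r_neg)

locale mainloc =
  fixes K :: "'k ring" and R :: "'a ring" and phi :: "'k \<Rightarrow> 'a"
    and G :: "('a, 'b) module \<Rightarrow> bool" and \<theta> :: "('a, 'b) module \<Rightarrow> real"
  assumes fd: "fd_algebra K R phi"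
    and tc: "torsion_class R G"
    and ad: "additive_fun R \<theta>"
begin

lemma ringR: "ring R" using fd by (simp add: fd_algebra_def)

lemmas tcu = tc[unfolded torsion_class_def ext_closed_def]
lemma G_modL: "G M \<Longrightarrow> modL R M" using tcu[THEN conjunct1] by (rule allE) (rule mp)
lemma G_zero: "modL R M \<Longrightarrow> is_zero_mod M \<Longrightarrow> G M"
  using tcu[THEN conjunct2, THEN conjunct1] by (elim allE) (erule mp, rule conjI)
lemma G_quot: "quot_map R B C g \<Longrightarrow> G B \<Longrightarrow> G C"
  using tcu[THEN conjunct2, THEN conjunct2, THEN conjunct2, THEN conjunct2] by (elim allE) (erule mp, rule conjI)
lemma G_ext: "ses R A B C f g \<Longrightarrow> G A \<Longrightarrow> G C \<Longrightarrow> G B"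
  using tcu[THEN conjunct2, THEN conjunct2, THEN conjunct2, THEN conjunct1] by (elim allE) (erule mp, intro conjI)

lemma theta_ses: "ses R A B C f g \<Longrightarrow> \<theta> B = \<theta> A + \<theta> C"
  using ad unfolding additive_fun_def by (elim allE) (erule mp)

lemma modL_rm: "modL R M \<Longrightarrow> right_module R M" by (simp add: modL_def)

lemma sub_modL: "modL R M \<Longrightarrow> rsubmod R M N \<Longrightarrow> modL R (subm M N)"
proof -
  assume M: "modL R M" and N: "rsubmod R M N"
  interpret fdm R M K phi using M fd by (simp add: fdm_def fdm_axioms_def rmod_def modL_def)
  show ?thesis using M N by (rule sub_modL)
qed

lemma theta_zero: assumes Z: "modL R Z" "is_zero_mod Z" shows "\<theta> Z = 0"
proof -
  interpret rmod R Z using Z by (simp add: rmod_def modL_def)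
  have "ses R Z Z Z id id"
    using Z unfolding ses_def by (auto simp: rhom_def kern_def is_zero_mod_def)
  then have "\<theta> Z = \<theta> Z + \<theta> Z" by (rule theta_ses)
  then show ?thesis by simp
qed

lemma rhm_of: "modL R M \<Longrightarrow> modL R N \<Longrightarrow> rhom R M N f \<Longrightarrow> rhm R M N f"
  by (simp add: rhm_def modL_def)

lemma G_image:
  assumes B: "modL R B" and C: "modL R C" and g: "rhom R B C g" and X: "rsubmod R B X"
    and GX: "G (subm B X)"
  shows "G (subm C (g ` X))"
proof -
  interpret H: rhm R B C g using rhm_of[OF B C g] .
  have Z: "rsubmod R C (g ` X)" using X by (rule H.image_sub)
  have "quot_map R (subm B X) (subm C (g ` X)) g"
    unfolding quot_map_def using sub_modL[OF B X] sub_modL[OF C Z] H.restrict[OF X Z] by auto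
  then show ?thesis using GX G_quot by blast
qed

lemma G_ext_sub:
  assumes B: "modL R B" and X: "rsubmod R B X" and Y: "rsubmod R B Y" and YX: "Y \<subseteq> X"
    and GY: "G (subm B Y)" and C: "modL R C" and Z: "rsubmod R C Z" and GZ: "G (subm C Z)"
    and g: "rhom R B C g" and gX: "g ` X = Z" and k: "{x \<in> X. g x = \<zero>\<^bsub>C\<^esub>} = Y"
  shows "G (subm B X)"
proof -
  interpret H: rhm R B C g using rhm_of[OF B C g] .
  interpret I: rhm R B B id using B by (simp add: rhm_def modL_def rhom_id)
  have "ses R (subm B Y) (subm B X) (subm C Z) id g"
    unfolding ses_def using sub_modL[OF B X] sub_modL[OF B Y] sub_modL[OF C Z]
      I.restrict[OF Y X] H.restrict[OF X Z] YX gX k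
    by (auto simp: kern_subm)
  then show ?thesis using G_ext GY GZ by blast
qed

lemma G_triv: "modL R B \<Longrightarrow> G (subm B {\<zero>\<^bsub>B\<^esub>})"
proof -
  assume B: "modL R B"
  interpret rmod R B using B by (simp add: rmod_def modL_def)
  show ?thesis using sub_modL[OF B rsub_triv] by (intro G_zero) (auto simp: is_zero_mod_def)
qed

end

context mainloc begin

definition PP :: "(('a, 'b) module \<Rightarrow> bool) \<Rightarrow> ('a, 'b) module \<Rightarrow> bool" where
  "PP \<Phi> B \<longleftrightarrow> G B \<and> (\<forall>C g. strict_quot R G B C g \<longrightarrow> \<Phi> C)"

lemma PP_use: "PP \<Phi> B \<Longrightarrow> strict_quot R G B C g \<Longrightarrow> \<Phi> C"
  unfolding PP_def by (elim conjE allE) (erule mp)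

lemma ss_use: "strict_subobj R G B A \<Longrightarrow> rsubmod R B B' \<Longrightarrow> G (subm B B') \<Longrightarrow> G (subm B (A \<inter> B'))"
  unfolding strict_subobj_def subobj_def by (elim conjE allE) (erule mp, rule conjI)

lemma ssI:
  assumes "rsubmod R B A" "G (subm B A)" "\<And>B'. rsubmod R B B' \<Longrightarrow> G (subm B B') \<Longrightarrow> G (subm B (A \<inter> B'))"
  shows "strict_subobj R G B A"
  using assms unfolding strict_subobj_def subobj_def by blast

lemma sq_parts:
  assumes "strict_quot R G B C g"
  shows "G B" "modL R B" "modL R C" "rhom R B C g" "g ` carrier B = carrier C"
    "strict_subobj R G B (kern B C g)" "G (subm B (kern B C g))"
  using assms unfolding strict_quot_def quot_map_def strict_subobj_def subobj_def by auto

lemma PP_quot: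
  assumes P: "PP \<Phi> B" and sq: "strict_quot R G B C g"
  shows "PP \<Phi> C"
proof -
  note sp = sq_parts[OF sq]
  interpret H: rhm R B C g using rhm_of sp by blast
  have GC: "G C" using G_quot sp unfolding quot_map_def by blast
  show ?thesis unfolding PP_def
  proof (intro conjI allI impI GC)
    fix D h assume sq2: "strict_quot R G C D h"
    note sp2 = sq_parts[OF sq2]
    interpret H2: rhm R C D h using rhm_of sp2 by blast
    have hg: "rhom R B D (h \<circ> g)" using sp sp2 rhom_comp by blast
    interpret H3: rhm R B D "h \<circ> g" using rhm_of sp sp2 hg by blast
    define X where "X = kern B D (h \<circ> g)"
    define Y where "Y = kern B C g"
    define Z where "Z = kern C D h"
    have Xs: "rsubmod R B X" unfolding X_def by (rule H3.kern_sub)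
    have Ys: "rsubmod R B Y" unfolding Y_def by (rule H.kern_sub)
    have Zs: "rsubmod R C Z" unfolding Z_def by (rule H2.kern_sub)
    have YX: "Y \<subseteq> X" by (auto simp: X_def Y_def kern_def)
    have gX: "g ` X = Z"
    proof
      show "g ` X \<subseteq> Z" by (auto simp: X_def Z_def kern_def)
      show "Z \<subseteq> g ` X"
      proof
        fix z assume z: "z \<in> Z"
        then obtain b where "b \<in> carrier B" "z = g b" using sp(5) by (auto simp: Z_def kern_def)
        then show "z \<in> g ` X" using z by (auto simp: X_def Z_def kern_def)
      qed
    qed
    have kX: "{x \<in> X. g x = \<zero>\<^bsub>C\<^esub>} = Y" by (auto simp: X_def Y_def kern_def)
    have GY: "G (subm B Y)" using sp by (simp add: Y_def)
    have GZ: "G (subm C Z)" using sp2 by (simp add: Z_def)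
    have GX: "G (subm B X)" by (rule G_ext_sub[OF sp(2) Xs Ys YX GY sp(3) Zs GZ sp(4) gX kX])
    have strict: "strict_subobj R G B X"
    proof (rule ssI[OF Xs GX])
      fix B' assume B's: "rsubmod R B B'" and GB': "G (subm B B')"
      have s1: "rsubmod R B (X \<inter> B')" using Xs B's by (rule H.M.rsub_Int)
      have s2: "rsubmod R B (Y \<inter> B')" using Ys B's by (rule H.M.rsub_Int)
      have gB's: "rsubmod R C (g ` B')" using B's by (rule H.image_sub)
      have GgB': "G (subm C (g ` B'))" by (rule G_image[OF sp(2) sp(3) sp(4) B's GB'])
      have s3: "rsubmod R C (Z \<inter> g ` B')" using Zs gB's by (rule H.N.rsub_Int)
      have G2: "G (subm B (Y \<inter> B'))" using ss_use[OF sp(6) B's GB'] by (simp add: Y_def)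
      have G3: "G (subm C (Z \<inter> g ` B'))" using ss_use[OF sp2(6) gB's GgB'] by (simp add: Z_def)
      have e1: "g ` (X \<inter> B') = Z \<inter> g ` B'"
      proof
        show "g ` (X \<inter> B') \<subseteq> Z \<inter> g ` B'" using gX by auto
        show "Z \<inter> g ` B' \<subseteq> g ` (X \<inter> B')"
        proof
          fix z assume z: "z \<in> Z \<inter> g ` B'"
          then obtain b where b: "b \<in> B'" "z = g b" by auto
          have "b \<in> carrier B" using b B's H.M.rsub_carrier by auto
          then have "b \<in> X" using z b by (auto simp: X_def Z_def kern_def)
          then show "z \<in> g ` (X \<inter> B')" using b by auto
        qed
      qed
      have e2: "{x \<in> X \<inter> B'. g x = \<zero>\<^bsub>C\<^esub>} = Y \<inter> B'" using kX YX by auto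
      show "G (subm B (X \<inter> B'))"
        by (rule G_ext_sub[OF sp(2) s1 s2 _ G2 sp(3) s3 G3 sp(4) e1 e2]) (use YX in auto)
    qed
    have surj: "(h \<circ> g) ` carrier B = carrier D" using sp(5) sp2(5) by (metis image_comp)
    have "strict_quot R G B D (h \<circ> g)"
      unfolding strict_quot_def quot_map_def
      using sp sp2 hg strict surj by (simp add: X_def)
    then show "\<Phi> D" using P by (rule PP_use[rotated])
  qed
qed

lemma rhom_id_sub: "X \<subseteq> carrier M \<Longrightarrow> rhom R (subm M X) M id"
  by (auto simp: rhom_def)

lemma PP_iso:
  assumes P: "PP \<Phi> B" and qm: "quot_map R B C g" and inj: "inj_on g (carrier B)"
  shows "PP \<Phi> C"
proof -
  have B: "modL R B" and C: "modL R C" and g: "rhom R B C g" using qm by (auto simp: quot_map_def)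
  interpret H: rhm R B C g using rhm_of B C g by blast
  have k: "kern B C g = {\<zero>\<^bsub>B\<^esub>}"
  proof
    show "kern B C g \<subseteq> {\<zero>\<^bsub>B\<^esub>}"
    proof
      fix x assume "x \<in> kern B C g"
      then have "x \<in> carrier B" "g x = g \<zero>\<^bsub>B\<^esub>" by (auto simp: kern_def)
      then have "x = \<zero>\<^bsub>B\<^esub>" using inj H.M.M.zero_closed by (metis inj_onD)
      then show "x \<in> {\<zero>\<^bsub>B\<^esub>}" by simp
    qed
    show "{\<zero>\<^bsub>B\<^esub>} \<subseteq> kern B C g" by (auto simp: kern_def)
  qed
  have GB: "G B" using P by (simp add: PP_def)
  have st: "strict_subobj R G B {\<zero>\<^bsub>B\<^esub>}"
  proof (rule ssI[OF H.M.rsub_triv G_triv[OF B]])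
    fix B' assume "rsubmod R B B'" "G (subm B B')"
    then have "{\<zero>\<^bsub>B\<^esub>} \<inter> B' = {\<zero>\<^bsub>B\<^esub>}" using H.M.rsub_zero by auto
    then show "G (subm B ({\<zero>\<^bsub>B\<^esub>} \<inter> B'))" using G_triv[OF B] by simp
  qed
  have "strict_quot R G B C g" unfolding strict_quot_def using GB qm st k by simp
  then show ?thesis using P PP_quot by blast
qed

end

lemma (in abelian_group) G5: "x \<in> carrier G \<Longrightarrow> x \<ominus> \<zero> = x"
proof -
  assume x: "x \<in> carrier G"
  have z: "\<ominus> \<zero> = \<zero>" by (rule minus_equality) auto
  show ?thesis using x by (simp add: minus_eq z)
qed

context mainloc begin

definition phi_ok :: "(('a, 'b) module \<Rightarrow> bool) \<Rightarrow> bool" where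
  "phi_ok \<Phi> \<longleftrightarrow> (\<forall>Z. modL R Z \<and> is_zero_mod Z \<longrightarrow> \<Phi> Z) \<and>
     (\<forall>D D1 Q. modL R D \<and> modL R D1 \<and> modL R Q \<and> \<theta> D = \<theta> D1 + \<theta> Q \<and> \<Phi> D1 \<and> \<Phi> Q \<and>
        (is_zero_mod D1 \<and> is_zero_mod Q \<longrightarrow> is_zero_mod D) \<longrightarrow> \<Phi> D)"

lemma phi_okD1: assumes ok: "phi_ok \<Phi>" and m: "modL R Z" and z: "is_zero_mod Z" shows "\<Phi> Z"
proof -
  have h: "\<forall>Z. modL R Z \<and> is_zero_mod Z \<longrightarrow> \<Phi> Z" using ok unfolding phi_ok_def by (rule conjunct1)
  show ?thesis by (rule h[rule_format, OF conjI[OF m z]])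
qed

lemma phi_okD2: "phi_ok \<Phi> \<Longrightarrow> modL R D \<Longrightarrow> modL R D1 \<Longrightarrow> modL R Q \<Longrightarrow> \<theta> D = \<theta> D1 + \<theta> Q \<Longrightarrow>
   \<Phi> D1 \<Longrightarrow> \<Phi> Q \<Longrightarrow> (is_zero_mod D1 \<and> is_zero_mod Q \<longrightarrow> is_zero_mod D) \<Longrightarrow> \<Phi> D"
proof -
  assume ok: "phi_ok \<Phi>" and a: "modL R D" "modL R D1" "modL R Q" "\<theta> D = \<theta> D1 + \<theta> Q"
   "\<Phi> D1" "\<Phi> Q" "is_zero_mod D1 \<and> is_zero_mod Q \<longrightarrow> is_zero_mod D"
  have h: "\<forall>D D1 Q. modL R D \<and> modL R D1 \<and> modL R Q \<and> \<theta> D = \<theta> D1 + \<theta> Q \<and> \<Phi> D1 \<and> \<Phi> Q \<and>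
        (is_zero_mod D1 \<and> is_zero_mod Q \<longrightarrow> is_zero_mod D) \<longrightarrow> \<Phi> D"
    using ok unfolding phi_ok_def by (rule conjunct2)
  show ?thesis by (rule h[rule_format, OF conjI[OF a(1) conjI[OF a(2) conjI[OF a(3) conjI[OF a(4)
     conjI[OF a(5) conjI[OF a(6) a(7)]]]]]]])
qed

lemma PP_ext_sub:
  assumes B: "modL R B" and A's: "rsubmod R B A'" and PA: "PP \<Phi> (subm B A')"
    and C: "modL R C" and g: "rhom R B C g" and gs: "g ` carrier B = carrier C"
    and kg: "kern B C g = A'" and PC: "PP \<Phi> C"
    and ok: "phi_ok \<Phi>"
  shows "PP \<Phi> B"
proof -
  interpret HG: rhm R B C g using rhm_of B C g by blast
  have GA: "G (subm B A')" using PA by (simp add: PP_def)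
  have GC: "G C" using PC by (simp add: PP_def)
  have A'c: "A' \<subseteq> carrier B" using A's by (rule HG.M.rsub_carrier)
  have "ses R (subm B A') B C id g"
    unfolding ses_def using sub_modL[OF B A's] B C rhom_id_sub[OF A'c] g gs kg by simp
  then have GB: "G B" using GA GC G_ext by blast
  show ?thesis unfolding PP_def
  proof (intro conjI allI impI GB)
    fix D h assume sq: "strict_quot R G B D h"
    note sp = sq_parts[OF sq]
    interpret HB: rhm R B D h using rhm_of sp by blast
    define N where "N = kern B D h"
    have Ns: "rsubmod R B N" unfolding N_def by (rule HB.kern_sub)
    have Nc: "N \<subseteq> carrier B" using Ns by (rule HG.M.rsub_carrier)
    define D1 where "D1 = h ` A'"
    have D1s: "rsubmod R D D1" unfolding D1_def using A's by (rule HB.image_sub)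
    have sq1: "strict_quot R G (subm B A') (subm D D1) h"
    proof -
      have qm: "quot_map R (subm B A') (subm D D1) h"
        unfolding quot_map_def using sub_modL[OF B A's] sub_modL[OF sp(3) D1s]
          HB.restrict[OF A's D1s] by (simp add: D1_def)
      have ke: "kern (subm B A') (subm D D1) h = N \<inter> A'"
        by (auto simp: kern_subm N_def kern_def dest: subsetD[OF A'c])
      have st: "strict_subobj R G (subm B A') (N \<inter> A')"
      proof (rule ssI)
        show "rsubmod R (subm B A') (N \<inter> A')"
          using HG.M.rsub_subm_iff[OF A's] HG.M.rsub_Int[OF Ns A's] by auto
        show "G (subm (subm B A') (N \<inter> A'))" using ss_use[OF sp(6) A's GA] by (simp add: N_def)
      next
        fix B2 assume B2: "rsubmod R (subm B A') B2" "G (subm (subm B A') B2)"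
        then have B2s: "rsubmod R B B2" "B2 \<subseteq> A'" "G (subm B B2)"
          using HG.M.rsub_subm_iff[OF A's] by auto
        have "G (subm B (N \<inter> B2))" using ss_use[OF sp(6) B2s(1) B2s(3)] by (simp add: N_def)
        moreover have "N \<inter> A' \<inter> B2 = N \<inter> B2" using B2s(2) by auto
        ultimately show "G (subm (subm B A') (N \<inter> A' \<inter> B2))" by simp
      qed
      show ?thesis unfolding strict_quot_def using GA qm st ke by simp
    qed
    have Phi1: "\<Phi> (subm D D1)" using PP_use[OF PA sq1] .
    obtain Q q where Q: "modL R Q" "rhom R D Q q" "q ` carrier D = carrier Q" "kern D Q q = D1"
      using quot_exists[OF fd sp(3) D1s] by blast
    interpret HQ: rhm R D Q q using rhm_of sp(3) Q(1,2) by blast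
    define q' where "q' = (\<lambda>c. q (h (SOME b. b \<in> carrier B \<and> g b = c)))"
    have q'g: "q' (g b) = q (h b)" if b: "b \<in> carrier B" for b
    proof -
      define b' where "b' = (SOME b'. b' \<in> carrier B \<and> g b' = g b)"
      have "b' \<in> carrier B \<and> g b' = g b" unfolding b'_def by (rule someI[of _ b]) (use b in auto)
      then have b': "b' \<in> carrier B" "g b' = g b" by auto
      have "b' \<ominus>\<^bsub>B\<^esub> b \<in> A'" using HG.kern_by_eq[OF b'(1) b b'(2)] kg by simp
      then have "h (b' \<ominus>\<^bsub>B\<^esub> b) \<in> D1" by (simp add: D1_def)
      then have "h b' \<ominus>\<^bsub>D\<^esub> h b \<in> kern D Q q" using HB.f_diff[OF b'(1) b] Q(4) by simp
      then have "q (h b') = q (h b)" by (rule HQ.eq_by_kern[rotated 2]) (use b b' in auto)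
      then show ?thesis by (simp add: q'_def b'_def)
    qed
    have q'hom: "rhom R C Q q'"
      unfolding rhom_def
    proof (intro conjI ballI)
      show "q' \<in> carrier C \<rightarrow> carrier Q"
      proof
        fix c assume "c \<in> carrier C"
        then obtain b where "b \<in> carrier B" "c = g b" using gs by blast
        then show "q' c \<in> carrier Q" using q'g by auto
      qed
    next
      fix x y assume "x \<in> carrier C" "y \<in> carrier C"
      then obtain a b where ab: "a \<in> carrier B" "x = g a" "b \<in> carrier B" "y = g b" using gs by blast
      then have "q' (x \<oplus>\<^bsub>C\<^esub> y) = q' (g (a \<oplus>\<^bsub>B\<^esub> b))" by (simp add: HG.f_add)
      also have "\<dots> = q (h (a \<oplus>\<^bsub>B\<^esub> b))" using ab by (simp add: q'g)
      also have "\<dots> = q (h a) \<oplus>\<^bsub>Q\<^esub> q (h b)" using ab by (simp add: HB.f_add HQ.f_add)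
      finally show "q' (x \<oplus>\<^bsub>C\<^esub> y) = q' x \<oplus>\<^bsub>Q\<^esub> q' y" using ab by (simp add: q'g)
    next
      fix r x assume r: "r \<in> carrier R" and "x \<in> carrier C"
      then obtain a where a: "a \<in> carrier B" "x = g a" using gs by blast
      then have "q' (r \<odot>\<^bsub>C\<^esub> x) = q' (g (r \<odot>\<^bsub>B\<^esub> a))" using r by (simp add: HG.f_smult)
      also have "\<dots> = q (h (r \<odot>\<^bsub>B\<^esub> a))" using a r by (simp add: q'g)
      also have "\<dots> = r \<odot>\<^bsub>Q\<^esub> q (h a)" using a r by (simp add: HB.f_smult HQ.f_smult)
      finally show "q' (r \<odot>\<^bsub>C\<^esub> x) = r \<odot>\<^bsub>Q\<^esub> q' x" using a by (simp add: q'g)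
    qed
    have q's: "q' ` carrier C = carrier Q"
    proof
      show "q' ` carrier C \<subseteq> carrier Q" using q'hom by (auto simp: rhom_def)
      show "carrier Q \<subseteq> q' ` carrier C"
      proof
        fix y assume "y \<in> carrier Q"
        then obtain d where d: "d \<in> carrier D" "y = q d" using Q(3) by blast
        then obtain b where b: "b \<in> carrier B" "d = h b" using sp(5) by blast
        then have "y = q' (g b)" using d q'g by simp
        then show "y \<in> q' ` carrier C" using b by auto
      qed
    qed
    have kq': "kern C Q q' = g ` N"
    proof
      show "kern C Q q' \<subseteq> g ` N"
      proof
        fix c assume c: "c \<in> kern C Q q'"
        then obtain b where b: "b \<in> carrier B" "c = g b" using gs by (auto simp: kern_def)
        then have "q (h b) = \<zero>\<^bsub>Q\<^esub>" using c q'g by (auto simp: kern_def)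
        then have "h b \<in> D1" using Q(4) b by (auto simp: kern_def)
        then obtain a where a: "a \<in> A'" "h b = h a" by (auto simp: D1_def)
        have ac: "a \<in> carrier B" using a A'c by auto
        have ga: "g a = \<zero>\<^bsub>C\<^esub>" using a kg by (auto simp: kern_def)
        have "b \<ominus>\<^bsub>B\<^esub> a \<in> N" using HB.kern_by_eq[OF b(1) ac a(2)] by (simp add: N_def)
        moreover have "g (b \<ominus>\<^bsub>B\<^esub> a) = c" using b ac ga by (simp add: HG.f_diff HG.N.M.G5)
        ultimately show "c \<in> g ` N" by blast
      qed
      show "g ` N \<subseteq> kern C Q q'"
      proof
        fix c assume "c \<in> g ` N"
        then obtain n where n: "n \<in> N" "c = g n" by blast
        then have "n \<in> carrier B" "h n = \<zero>\<^bsub>D\<^esub>" by (auto simp: N_def kern_def)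
        then show "c \<in> kern C Q q'" using n q'g by (auto simp: kern_def)
      qed
    qed
    have sq2: "strict_quot R G C Q q'"
    proof -
      have gNs: "rsubmod R C (g ` N)" using Ns by (rule HG.image_sub)
      have GN: "G (subm B N)" using sp(7) by (simp add: N_def)
      have st: "strict_subobj R G C (g ` N)"
      proof (rule ssI[OF gNs G_image[OF B C g Ns GN]])
        fix C' assume C's: "rsubmod R C C'" and GC': "G (subm C C')"
        define B' where "B' = {b \<in> carrier B. g b \<in> C'}"
        have B's: "rsubmod R B B'" unfolding B'_def using C's by (rule HG.preimage_sub)
        have A'B': "A' \<subseteq> B'" using kg HG.N.rsub_zero[OF C's] by (auto simp: B'_def kern_def)
        have gB': "g ` B' = C'"
        proof
          show "g ` B' \<subseteq> C'" by (auto simp: B'_def)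
          show "C' \<subseteq> g ` B'"
          proof
            fix c assume c: "c \<in> C'"
            then have "c \<in> carrier C" using HG.N.rsub_carrier[OF C's] by auto
            then obtain b where "b \<in> carrier B" "c = g b" using gs by blast
            then show "c \<in> g ` B'" using c by (auto simp: B'_def)
          qed
        qed
        have kB': "{x \<in> B'. g x = \<zero>\<^bsub>C\<^esub>} = A'" using kg A'B' by (auto simp: B'_def kern_def)
        have GB': "G (subm B B')" by (rule G_ext_sub[OF B B's A's A'B' GA C C's GC' g gB' kB'])
        have "G (subm B (N \<inter> B'))" using ss_use[OF sp(6) B's GB'] by (simp add: N_def)
        then have "G (subm C (g ` (N \<inter> B')))"
          using G_image[OF B C g HG.M.rsub_Int[OF Ns B's]] by blast
        moreover have "g ` (N \<inter> B') = g ` N \<inter> C'" using Nc by (auto simp: B'_def)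
        ultimately show "G (subm C (g ` N \<inter> C'))" by simp
      qed
      show ?thesis unfolding strict_quot_def quot_map_def using GC C Q(1) q'hom q's st kq' by simp
    qed
    have Phi2: "\<Phi> Q" using PP_use[OF PC sq2] .
    have D1c: "D1 \<subseteq> carrier D" using D1s by (rule HB.N.rsub_carrier)
    have "ses R (subm D D1) D Q id q"
      unfolding ses_def using sub_modL[OF sp(3) D1s] sp(3) Q rhom_id_sub[OF D1c] by simp
    then have th: "\<theta> D = \<theta> (subm D D1) + \<theta> Q" by (rule theta_ses)
    show "\<Phi> D"
    proof (rule phi_okD2[OF ok sp(3) sub_modL[OF sp(3) D1s] Q(1) th Phi1 Phi2], intro impI, elim conjE)
      assume z1: "is_zero_mod (subm D D1)" and z2: "is_zero_mod Q"
      have "carrier D \<subseteq> D1"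
      proof
        fix d assume d: "d \<in> carrier D"
        then have "q d = \<zero>\<^bsub>Q\<^esub>" using z2 HQ.f_closed[OF d] by (auto simp: is_zero_mod_def)
        then show "d \<in> D1" using Q(4) d by (auto simp: kern_def)
      qed
      then show "is_zero_mod D" using z1 D1c by (auto simp: is_zero_mod_def)
    qed
  qed
qed

end

definition zmod :: "('a, 'b) module" where
  "zmod = \<lparr>carrier = {undefined}, mult = (\<lambda>x y. undefined), one = undefined,
     zero = undefined, add = (\<lambda>x y. undefined), smult = (\<lambda>r x. undefined)\<rparr>"

lemma zmod_modL: "ring R \<Longrightarrow> modL R (zmod :: ('a, 'b) module)"
proof -
  assume R: "ring R"
  have ag: "abelian_group (zmod :: ('a, 'b) module)"
    by (rule abelian_groupI) (auto simp: zmod_def)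
  then have rm: "right_module R (zmod :: ('a, 'b) module)"
    using R by (auto simp: right_module_def zmod_def)
  interpret abelian_group "zmod :: ('a, 'b) module" by (rule ag)
  have c: "carrier (zmod :: ('a, 'b) module) = {\<zero>\<^bsub>zmod :: ('a, 'b) module\<^esub>}" by (simp add: zmod_def)
  have "fin_gen R (zmod :: ('a, 'b) module)"
    unfolding fin_gen_def by (intro exI[of _ "{}"]) (simp add: c finsum_empty)
  then show ?thesis using rm by (simp add: modL_def)
qed

lemma zmod_zero: "is_zero_mod zmod" by (simp add: is_zero_mod_def zmod_def)

lemma rhom_into_sub: "rhom R A B f \<Longrightarrow> f ` carrier A \<subseteq> X \<Longrightarrow> rhom R A (subm B X) f"
  by (auto simp: rhom_def)

context mainloc begin

lemma PP_ext:
  assumes s: "ses R A B C f g" and PA: "PP \<Phi> A" and PC: "PP \<Phi> C"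
    and ok: "phi_ok \<Phi>"
  shows "PP \<Phi> B"
proof -
  have A: "modL R A" and B: "modL R B" and C: "modL R C" and f: "rhom R A B f"
    and inj: "inj_on f (carrier A)" and g: "rhom R B C g" and gs: "g ` carrier B = carrier C"
    and fk: "f ` carrier A = kern B C g" using s by (auto simp: ses_def)
  interpret HG: rhm R B C g using rhm_of B C g by blast
  define A' where "A' = kern B C g"
  have A's: "rsubmod R B A'" unfolding A'_def by (rule HG.kern_sub)
  have qm: "quot_map R A (subm B A') f"
    unfolding quot_map_def using A sub_modL[OF B A's] rhom_into_sub[OF f] fk by (simp add: A'_def)
  have PA': "PP \<Phi> (subm B A')" by (rule PP_iso[OF PA qm inj])
  have kgA: "kern B C g = A'" by (simp add: A'_def)
  show ?thesis by (rule PP_ext_sub[OF B A's PA' C g gs kgA PC ok])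
qed

lemma PP_dsum:
  assumes B: "modL R B" and As: "rsubmod R B A" and Cs: "rsubmod R B C"
    and AC: "A \<inter> C = {\<zero>\<^bsub>B\<^esub>}" and sp: "\<forall>x\<in>carrier B. \<exists>a\<in>A. \<exists>c\<in>C. x = a \<oplus>\<^bsub>B\<^esub> c"
    and PA: "PP \<Phi> (subm B A)" and PC: "PP \<Phi> (subm B C)"
    and ok: "phi_ok \<Phi>"
  shows "PP \<Phi> B"
proof -
  obtain Q q where Q: "modL R Q" "rhom R B Q q" "q ` carrier B = carrier Q" "kern B Q q = A"
    using quot_exists[OF fd B As] by blast
  interpret HQ: rhm R B Q q using rhm_of B Q(1,2) by blast
  have Ac: "A \<subseteq> carrier B" using As by (rule HQ.M.rsub_carrier)
  have Cc: "C \<subseteq> carrier B" using Cs by (rule HQ.M.rsub_carrier)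
  have hC: "rhom R (subm B C) Q q" unfolding rhom_def
    using Cc by (auto intro!: HQ.f_add HQ.f_smult)
  have sC: "q ` C = carrier Q"
  proof
    show "q ` C \<subseteq> carrier Q" using Cc by auto
    show "carrier Q \<subseteq> q ` C"
    proof
      fix y assume "y \<in> carrier Q"
      then obtain x where x: "x \<in> carrier B" "y = q x" using Q(3) by blast
      then obtain a c where ac: "a \<in> A" "c \<in> C" "x = a \<oplus>\<^bsub>B\<^esub> c" using sp by blast
      have "q a = \<zero>\<^bsub>Q\<^esub>" using ac Q(4) by (auto simp: kern_def)
      have "q x = q a \<oplus>\<^bsub>Q\<^esub> q c" using ac Ac Cc by (intro HQ.f_add[of a c, simplified ac(3)[symmetric]]) auto
      then have "y = q c" using x ac Ac Cc \<open>q a = \<zero>\<^bsub>Q\<^esub>\<close> by auto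
      then show "y \<in> q ` C" using ac by auto
    qed
  qed
  have inj: "inj_on q C"
  proof (rule inj_onI)
    fix x y assume xy: "x \<in> C" "y \<in> C" "q x = q y"
    then have "x \<ominus>\<^bsub>B\<^esub> y \<in> A" using HQ.kern_by_eq[of x y] Q(4) Cc by auto
    moreover have "x \<ominus>\<^bsub>B\<^esub> y \<in> C" using xy Cs by (simp add: HQ.M.rsub_diff)
    ultimately have "x \<ominus>\<^bsub>B\<^esub> y = \<zero>\<^bsub>B\<^esub>" using AC by blast
    moreover have xc: "x \<in> carrier B" and yc: "y \<in> carrier B" using xy Cc by auto
    moreover have "x = (x \<ominus>\<^bsub>B\<^esub> y) \<oplus>\<^bsub>B\<^esub> y"
      using xc yc by (simp add: HQ.M.M.minus_eq HQ.M.M.a_assoc HQ.M.M.l_neg)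
    ultimately show "x = y" by simp
  qed
  have qm: "quot_map R (subm B C) Q q"
    unfolding quot_map_def using sub_modL[OF B Cs] Q(1) hC sC by simp
  have PQ: "PP \<Phi> Q" using PP_iso[OF PC qm] inj by simp
  show ?thesis by (rule PP_ext_sub[OF B As PA Q(1,2,3,4) PQ ok])
qed

lemma PP_pseudo:
  assumes ok: "phi_ok \<Phi>"
  shows "pseudo_torsion_class R G (PP \<Phi>) \<and> ext_closed R (PP \<Phi>) \<and> dsum_closed R (PP \<Phi>)"
proof -
  have ext: "ext_closed R (PP \<Phi>)"
    unfolding ext_closed_def
  proof (intro allI impI, elim conjE)
    fix A B C f g assume "ses R A B C f g" "PP \<Phi> A" "PP \<Phi> C"
    then show "PP \<Phi> B" by (rule PP_ext[OF _ _ _ ok])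
  qed
  have z: "PP \<Phi> zmod"
    unfolding PP_def
  proof (intro conjI allI impI)
    show "G zmod" using G_zero zmod_modL[OF ringR] zmod_zero by blast
    fix C g assume sq: "strict_quot R G zmod C g"
    note sp = sq_parts[OF sq]
    interpret rhm R zmod C g using rhm_of sp by blast
    show "\<Phi> C" using phi_okD1[OF ok sp(3) image_zero[OF zmod_zero sp(5)]] .
  qed
  have pt: "pseudo_torsion_class R G (PP \<Phi>)"
    unfolding pseudo_torsion_class_def
  proof (intro conjI allI impI)
    show "\<exists>M. PP \<Phi> M" using z by blast
    show "\<And>M. PP \<Phi> M \<Longrightarrow> G M" by (simp add: PP_def)
    show "\<And>B C g. PP \<Phi> B \<and> strict_quot R G B C g \<Longrightarrow> PP \<Phi> C" using PP_quot by blast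
    fix A B C f g assume a: "strict_ses R G A B C f g \<and> PP \<Phi> A \<and> PP \<Phi> C"
    then have "ses R A B C f g" by (simp add: strict_ses_def)
    moreover have "PP \<Phi> A" "PP \<Phi> C" using a by auto
    ultimately show "PP \<Phi> B" by (rule PP_ext[OF _ _ _ ok])
  qed
  have ds: "dsum_closed R (PP \<Phi>)"
    unfolding dsum_closed_def
  proof (intro allI impI, elim conjE)
    fix B A C assume a: "modL R B" "rsubmod R B A" "rsubmod R B C" "A \<inter> C = {\<zero>\<^bsub>B\<^esub>}"
      "\<forall>x\<in>carrier B. \<exists>a\<in>A. \<exists>c\<in>C. x = a \<oplus>\<^bsub>B\<^esub> c" "PP \<Phi> (subm B A)" "PP \<Phi> (subm B C)"
    show "PP \<Phi> B" by (rule PP_dsum[OF a ok])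
  qed
  show ?thesis using pt ext ds by blast
qed

definition Phi1 :: "('a, 'b) module \<Rightarrow> bool" where
  "Phi1 C \<longleftrightarrow> (is_zero_mod C \<and> \<theta> C = 0) \<or> \<theta> C > 0"

lemma Pth_eq: "Pth R G \<theta> = PP Phi1"
proof (rule ext)
  fix M
  show "Pth R G \<theta> M = PP Phi1 M"
  proof
    assume P: "Pth R G \<theta> M"
    show "PP Phi1 M" unfolding PP_def
    proof (intro conjI allI impI)
      show "G M" using P by (simp add: Pth_def)
      fix C g assume sq: "strict_quot R G M C g"
      note sp = sq_parts[OF sq]
      interpret rhm R M C g using rhm_of sp by blast
      show "Phi1 C"
      proof (cases "is_zero_mod C")
        case True then show ?thesis using theta_zero sp(3) by (simp add: Phi1_def)
      next
        case False
        then have "\<not> is_zero_mod M" using image_zero sp(5) by blast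
        moreover have "is_zero_mod M \<or> (\<forall>C g. strict_quot R G M C g \<and> \<not> is_zero_mod C \<longrightarrow> \<theta> C > 0)"
          using P unfolding Pth_def by (rule conjunct2)
        ultimately have "\<forall>C g. strict_quot R G M C g \<and> \<not> is_zero_mod C \<longrightarrow> \<theta> C > 0" by simp
        then have "\<theta> C > 0" using sq False by blast
        then show ?thesis by (simp add: Phi1_def)
      qed
    qed
  next
    assume P: "PP Phi1 M"
    show "Pth R G \<theta> M" unfolding Pth_def
    proof (intro conjI)
      show "G M" using P by (simp add: PP_def)
      show "is_zero_mod M \<or> (\<forall>C g. strict_quot R G M C g \<and> \<not> is_zero_mod C \<longrightarrow> 0 < \<theta> C)"
        using PP_use[OF P] by (auto simp: Phi1_def)
    qed
  qed
qed

lemma Pbar_eq: "Pbar R G \<theta> = PP (\<lambda>C. \<theta> C \<ge> 0)"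
  by (rule ext) (simp add: Pbar_def PP_def)

lemma Phi1_ok: "phi_ok Phi1"
  unfolding phi_ok_def Phi1_def using theta_zero by auto

lemma Phi2_ok: "phi_ok (\<lambda>C. \<theta> C \<ge> 0)"
  unfolding phi_ok_def using theta_zero by auto

lemma final:
  "pseudo_torsion_class R G (Pth R G \<theta>) \<and> pseudo_torsion_class R G (Pbar R G \<theta>) \<and>
         ext_closed R (Pth R G \<theta>) \<and> ext_closed R (Pbar R G \<theta>) \<and>
         dsum_closed R (Pth R G \<theta>) \<and> dsum_closed R (Pbar R G \<theta>)"
  using PP_pseudo[OF Phi1_ok] PP_pseudo[OF Phi2_ok]
  unfolding Pth_eq Pbar_eq by blast

end

theorem mainTheorem11:
  fixes K :: "'k ring" and R :: "'a ring" and phi :: "'k \<Rightarrow> 'a"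
    and G :: "('a, 'b) module \<Rightarrow> bool" and \<theta> :: "('a, 'b) module \<Rightarrow> real"
  assumes "fd_algebra K R phi"
    and "torsion_class R G"
    and "additive_fun R \<theta>"
  shows "pseudo_torsion_class R G (Pth R G \<theta>) \<and> pseudo_torsion_class R G (Pbar R G \<theta>) \<and>
         ext_closed R (Pth R G \<theta>) \<and> ext_closed R (Pbar R G \<theta>) \<and>
         dsum_closed R (Pth R G \<theta>) \<and> dsum_closed R (Pbar R G \<theta>)"
proof -
  interpret mainloc K R phi G \<theta> using assms by (simp add: mainloc_def)
  show ?thesis by (rule final)
qed

end
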